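(* There exists an algorithm that takes as input a scalar Generalized Path Problem instance $(G,W,L,x_0)$, where $G$ is a directed acyclic graph with $n$ vertices (including two special vertices $s,t$) and each edge $e$ of $G$ has weight function $w_e(x)=a_e x+b_e$ with $a_e,b_e\in\mathbb{R}$, and outputs an optimal $s$-$t$ path in $G$, in $O(n^3)$ running time.
   Context: A Generalized Path Problem (GPP) instance is a tuple $(G,W,L,\mathbf{x}_0)$ where $G=(V\cup\{s,t\},E)$ is a directed acyclic graph with special vertices $s,t$, $W=\{w_e:\mathbb{R}^k\to\mathbb{R}^k : e\in E\}$ is a set of edge weight functions, $L\in\mathbb{R}^k$, and $\mathbf{x}_0\in\mathbb{R}^k$ is the initial parameter. The goal is to output an $s$-$t$ path $P=(e_1,\dots,e_r)$ maximizing $L\cdot w_{e_r}(w_{e_{r-1}}(\cdots w_{e_1}(\mathbf{x}_0)\cdots))$; such a path is called optimal. The instance is called scalar when $k=1$. *)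

theory Defs
  imports Complex_Main
begin

type_synonym mem = "nat \<Rightarrow> real"

datatype aexp = N int | Rd aexp | Add aexp aexp | Sub aexp aexp | Mul aexp aexp | Dv aexp aexp

datatype bexp = Bc bool | BNot bexp | BAnd bexp bexp | Less aexp aexp

datatype com =
    SKIP
  | Assign aexp aexp     (* Assign addr e : memory cell at address addr gets value of e *)
  | Seq com com
  | If bexp com com
  | While bexp com

fun aval :: "aexp \<Rightarrow> mem \<Rightarrow> real option" where
  "aval (N i) m = Some (of_int i)"
| "aval (Rd a) m = (case aval a m of None \<Rightarrow> None
     | Some x \<Rightarrow> if x \<in> \<nat> then Some (m (nat \<lfloor>x\<rfloor>)) else None)"
| "aval (Add a1 a2) m = (case (aval a1 m, aval a2 m) of (Some x, Some y) \<Rightarrow> Some (x + y) | _ \<Rightarrow> None)"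
| "aval (Sub a1 a2) m = (case (aval a1 m, aval a2 m) of (Some x, Some y) \<Rightarrow> Some (x - y) | _ \<Rightarrow> None)"
| "aval (Mul a1 a2) m = (case (aval a1 m, aval a2 m) of (Some x, Some y) \<Rightarrow> Some (x * y) | _ \<Rightarrow> None)"
| "aval (Dv a1 a2) m = (case (aval a1 m, aval a2 m) of
     (Some x, Some y) \<Rightarrow> if y = 0 then None else Some (x / y) | _ \<Rightarrow> None)"

fun bval :: "bexp \<Rightarrow> mem \<Rightarrow> bool option" where
  "bval (Bc v) m = Some v"
| "bval (BNot b) m = map_option HOL.Not (bval b m)"
| "bval (BAnd b1 b2) m = (case (bval b1 m, bval b2 m) of (Some x, Some y) \<Rightarrow> Some (x \<and> y) | _ \<Rightarrow> None)"
| "bval (Less a1 a2) m = (case (aval a1 m, aval a2 m) of (Some x, Some y) \<Rightarrow> Some (x < y) | _ \<Rightarrow> None)"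

fun acost :: "aexp \<Rightarrow> nat" where
  "acost (N i) = 1"
| "acost (Rd a) = Suc (acost a)"
| "acost (Add a1 a2) = Suc (acost a1 + acost a2)"
| "acost (Sub a1 a2) = Suc (acost a1 + acost a2)"
| "acost (Mul a1 a2) = Suc (acost a1 + acost a2)"
| "acost (Dv a1 a2) = Suc (acost a1 + acost a2)"

fun bcost :: "bexp \<Rightarrow> nat" where
  "bcost (Bc v) = 1"
| "bcost (BNot b) = Suc (bcost b)"
| "bcost (BAnd b1 b2) = Suc (bcost b1 + bcost b2)"
| "bcost (Less a1 a2) = Suc (acost a1 + acost a2)"

inductive big_step :: "com \<Rightarrow> mem \<Rightarrow> nat \<Rightarrow> mem \<Rightarrow> bool" where
  Skip: "big_step SKIP m 1 m"
| Assign: "\<lbrakk> aval a m = Some (of_nat k); aval e m = Some v \<rbrakk> \<Longrightarrow>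
     big_step (Assign a e) m (Suc (acost a + acost e)) (m(k := v))"
| Seq: "\<lbrakk> big_step c1 m t1 m1; big_step c2 m1 t2 m2 \<rbrakk> \<Longrightarrow>
     big_step (Seq c1 c2) m (Suc (t1 + t2)) m2"
| IfTrue: "\<lbrakk> bval b m = Some True; big_step c1 m t m' \<rbrakk> \<Longrightarrow>
     big_step (If b c1 c2) m (Suc (bcost b + t)) m'"
| IfFalse: "\<lbrakk> bval b m = Some False; big_step c2 m t m' \<rbrakk> \<Longrightarrow>
     big_step (If b c1 c2) m (Suc (bcost b + t)) m'"
| WhileFalse: "bval b m = Some False \<Longrightarrow> big_step (While b c) m (Suc (bcost b)) m"
| WhileTrue: "\<lbrakk> bval b m = Some True; big_step c m t1 m1; big_step (While b c) m1 t2 m2 \<rbrakk> \<Longrightarrow>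
     big_step (While b c) m (Suc (bcost b + t1 + t2)) m2"

text \<open>Vertices are 0..<n (including s and t); E is the edge set;
  the weight of edge (u,v) is x \<mapsto> a u v * x + b u v.\<close>

definition scalar_gpp_instance ::
  "nat \<Rightarrow> (nat \<times> nat) set \<Rightarrow> nat \<Rightarrow> nat \<Rightarrow> bool" where
  "scalar_gpp_instance n E s t \<longleftrightarrow>
     E \<subseteq> {..<n} \<times> {..<n} \<and> acyclic E \<and> s < n \<and> t < n \<and> s \<noteq> t"

definition is_st_path :: "(nat \<times> nat) set \<Rightarrow> nat \<Rightarrow> nat \<Rightarrow> nat list \<Rightarrow> bool" where
  "is_st_path E s t vs \<longleftrightarrow> vs \<noteq> [] \<and> hd vs = s \<and> last vs = t \<and>
     (\<forall>i. Suc i < length vs \<longrightarrow> (vs ! i, vs ! Suc i) \<in> E)"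

text \<open>Parameter obtained by applying the edge weights along the path
  (first edge applied first).\<close>
fun path_apply :: "(nat \<Rightarrow> nat \<Rightarrow> real) \<Rightarrow> (nat \<Rightarrow> nat \<Rightarrow> real) \<Rightarrow> nat list \<Rightarrow> real \<Rightarrow> real" where
  "path_apply a b (u # v # rest) x = path_apply a b (v # rest) (a u v * x + b u v)"
| "path_apply a b _ x = x"

definition optimal_path ::
  "(nat \<times> nat) set \<Rightarrow> (nat \<Rightarrow> nat \<Rightarrow> real) \<Rightarrow> (nat \<Rightarrow> nat \<Rightarrow> real) \<Rightarrow> real \<Rightarrow> real
   \<Rightarrow> nat \<Rightarrow> nat \<Rightarrow> nat list \<Rightarrow> bool" where
  "optimal_path E a b L x0 s t vs \<longleftrightarrow> is_st_path E s t vs \<and>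
     (\<forall>ws. is_st_path E s t ws \<longrightarrow> L * path_apply a b ws x0 \<le> L * path_apply a b vs x0)"

text \<open>Input layout: cell 0 = n, 1 = s, 2 = t, 3 = L, 4 = x0; for u, v < n the three cells
  starting at 5 + 3*(u*n+v) hold: 1/0 (edge present or not), a_(u,v), b_(u,v)
  (the latter two are 0 if there is no edge). All other cells are 0.\<close>
definition encode_input ::
  "nat \<Rightarrow> (nat \<times> nat) set \<Rightarrow> (nat \<Rightarrow> nat \<Rightarrow> real) \<Rightarrow> (nat \<Rightarrow> nat \<Rightarrow> real) \<Rightarrow> real \<Rightarrow> real
   \<Rightarrow> nat \<Rightarrow> nat \<Rightarrow> mem" where
  "encode_input n E a b L x0 s t k =
     (if k = 0 then real n
      else if k = 1 then real s
      else if k = 2 then real t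
      else if k = 3 then L
      else if k = 4 then x0
      else (let j = k - 5; q = j div 3; r = j mod 3; u = q div n; v = q mod n in
            if q < n * n \<and> (u, v) \<in> E then
              (if r = 0 then 1 else if r = 1 then a u v else b u v)
            else 0))"

definition outputs_path :: "mem \<Rightarrow> nat list \<Rightarrow> bool" where
  "outputs_path m vs \<longleftrightarrow> m 0 = real (length vs) \<and> (\<forall>i < length vs. m (Suc i) = real (vs ! i))"

end

theory Submission
  imports Defs
begin


definition wpT :: "com \<Rightarrow> (mem \<Rightarrow> bool) \<Rightarrow> mem \<Rightarrow> nat \<Rightarrow> bool" where
  "wpT c Q m T \<longleftrightarrow> (\<exists>t m'. big_step c m t m' \<and> t \<le> T \<and> Q m')"

definition hT :: "(mem \<Rightarrow> bool) \<Rightarrow> com \<Rightarrow> (mem \<Rightarrow> bool) \<Rightarrow> nat \<Rightarrow> bool" where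
  "hT P c Q T \<longleftrightarrow> (\<forall>m. P m \<longrightarrow> wpT c Q m T)"

fun tmax :: "com \<Rightarrow> nat" where
  "tmax SKIP = 1"
| "tmax (Assign x e) = Suc (acost x + acost e)"
| "tmax (Seq c1 c2) = Suc (tmax c1 + tmax c2)"
| "tmax (If bb c1 c2) = Suc (bcost bb + max (tmax c1) (tmax c2))"
| "tmax (While bb c) = 0"

lemma wp_time: "wpT c Q m T \<Longrightarrow> T \<le> T' \<Longrightarrow> wpT c Q m T'"
  unfolding wpT_def by (meson order_trans)

lemma wp_post: "wpT c Q m T \<Longrightarrow> (\<And>m. Q m \<Longrightarrow> Q' m) \<Longrightarrow> wpT c Q' m T"
  unfolding wpT_def by blast

lemma wp_skip: "Q m \<Longrightarrow> wpT SKIP Q m (tmax SKIP)"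
  unfolding wpT_def by (intro exI[of _ 1] exI[of _ m]) (simp add: big_step.Skip[of m, simplified])

lemma wp_assign: "aval x m = Some (real k) \<Longrightarrow> aval e m = Some v \<Longrightarrow> Q (m(k:=v))
  \<Longrightarrow> wpT (Assign x e) Q m (tmax (Assign x e))"
  unfolding wpT_def by (auto intro!: big_step.Assign)

lemma wp_seq_gen: "wpT c1 (\<lambda>m'. wpT c2 Q m' T2) m T1 \<Longrightarrow> wpT (Seq c1 c2) Q m (Suc (T1 + T2))"
  unfolding wpT_def by (fastforce intro: big_step.Seq)

lemma wp_seq: "wpT c1 (\<lambda>m'. wpT c2 Q m' (tmax c2)) m (tmax c1) \<Longrightarrow> wpT (Seq c1 c2) Q m (tmax (Seq c1 c2))"
  using wp_seq_gen by simp

lemma wp_if_gen: "bval bb m = Some bv \<Longrightarrow> (bv \<Longrightarrow> wpT c1 Q m T1) \<Longrightarrow> (\<not> bv \<Longrightarrow> wpT c2 Q m T2)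
  \<Longrightarrow> wpT (If bb c1 c2) Q m (Suc (bcost bb + max T1 T2))"
proof (cases bv)
  case True
  assume h: "bval bb m = Some bv" "bv \<Longrightarrow> wpT c1 Q m T1"
  then obtain t m' where "big_step c1 m t m'" "t \<le> T1" "Q m'" using True unfolding wpT_def by blast
  then show ?thesis unfolding wpT_def using True h
    by (intro exI[of _ "Suc (bcost bb + t)"] exI[of _ m']) (auto intro: big_step.IfTrue)
next
  case False
  assume h: "bval bb m = Some bv" "\<not> bv \<Longrightarrow> wpT c2 Q m T2"
  then obtain t m' where "big_step c2 m t m'" "t \<le> T2" "Q m'" using False unfolding wpT_def by blast
  then show ?thesis unfolding wpT_def using False h
    by (intro exI[of _ "Suc (bcost bb + t)"] exI[of _ m']) (auto intro: big_step.IfFalse)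
qed

lemma wp_if: "bval bb m = Some bv \<Longrightarrow> (bv \<Longrightarrow> wpT c1 Q m (tmax c1)) \<Longrightarrow> (\<not> bv \<Longrightarrow> wpT c2 Q m (tmax c2))
  \<Longrightarrow> wpT (If bb c1 c2) Q m (tmax (If bb c1 c2))"
  using wp_if_gen by simp

lemma hT_seq: assumes a: "hT P c1 R T1" "hT R c2 Q T2" "Suc (T1 + T2) \<le> T" shows "hT P (Seq c1 c2) Q T"
  unfolding hT_def
proof (intro allI impI)
  fix m assume "P m"
  then have "wpT c1 (\<lambda>m'. wpT c2 Q m' T2) m T1"
    using a(1,2) unfolding hT_def by (auto intro: wp_post)
  then show "wpT (Seq c1 c2) Q m T" using wp_seq_gen wp_time a(3) by blast
qed

lemma hT_conseq: "hT P c Q T \<Longrightarrow> (\<And>m. P' m \<Longrightarrow> P m) \<Longrightarrow> (\<And>m. Q m \<Longrightarrow> Q' m) \<Longrightarrow> T \<le> T' \<Longrightarrow> hT P' c Q' T'"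
  unfolding hT_def
proof (intro allI impI)
  fix m assume a: "\<forall>m. P m \<longrightarrow> wpT c Q m T" "\<And>m. P' m \<Longrightarrow> P m" "\<And>m. Q m \<Longrightarrow> Q' m" "T \<le> T'" "P' m"
  then have "wpT c Q m T" by blast
  then have "wpT c Q' m T" using a(3) by (rule wp_post)
  then show "wpT c Q' m T'" using a(4) by (rule wp_time)
qed

lemma while_aux:
  assumes body: "\<And>i m. I i m \<Longrightarrow> bval bb m = Some True \<Longrightarrow> wpT c (I (Suc i)) m Tb"
  and def: "\<And>i m. I i m \<Longrightarrow> bval bb m \<noteq> None"
  and bound: "\<And>i m. I i m \<Longrightarrow> bval bb m = Some True \<Longrightarrow> i < K"
  shows "K - i = d \<Longrightarrow> I i m \<Longrightarrow> wpT (While bb c) (\<lambda>m. \<exists>i. I i m \<and> bval bb m = Some False) m ((d+1)*(Tb + bcost bb + 1))"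
proof (induction d arbitrary: i m)
  case 0
  have "bval bb m = Some False"
  proof (rule ccontr)
    assume "bval bb m \<noteq> Some False"
    then have "bval bb m = Some True" using def[OF 0(2)] by (cases "bval bb m") auto
    then have "i < K" using bound 0(2) by blast
    then show False using 0(1) by simp
  qed
  moreover have "big_step (While bb c) m (Suc (bcost bb)) m" using calculation by (rule big_step.WhileFalse)
  moreover have "Suc (bcost bb) \<le> (0+1) * (Tb + bcost bb + 1)" by simp
  ultimately show ?case unfolding wpT_def using 0(2) by blast
next
  case (Suc d)
  show ?case
  proof (cases "bval bb m = Some False")
    case True
    moreover have "big_step (While bb c) m (Suc (bcost bb)) m" using calculation by (rule big_step.WhileFalse)
    moreover have "Suc (bcost bb) \<le> (Suc d+1) * (Tb + bcost bb + 1)" by simp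
    ultimately show ?thesis unfolding wpT_def using Suc(3) by blast
  next
    case False
    then have T: "bval bb m = Some True" using def[OF Suc(3)] by (cases "bval bb m") auto
    from body[OF Suc(3) T] obtain t1 m1 where 1: "big_step c m t1 m1" "t1 \<le> Tb" "I (Suc i) m1"
      unfolding wpT_def by blast
    have "K - Suc i = d" using Suc bound[OF Suc(3) T] by simp
    from Suc.IH[OF this 1(3)] obtain t2 m2 where 2: "big_step (While bb c) m1 t2 m2"
      "t2 \<le> (d+1)*(Tb + bcost bb + 1)" "\<exists>i. I i m2 \<and> bval bb m2 = Some False"
      unfolding wpT_def by blast
    have "Suc (bcost bb + t1 + t2) \<le> (Suc d + 1) * (Tb + bcost bb + 1)"
      using 1(2) 2(2) by (simp add: algebra_simps)
    then show ?thesis unfolding wpT_def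
      using big_step.WhileTrue[OF T 1(1) 2(1)] 2(3) by blast
  qed
qed

lemma hT_while:
  assumes "\<And>i. hT (\<lambda>m. I i m \<and> bval bb m = Some True) c (I (Suc i)) Tb"
  and "\<And>i m. I i m \<Longrightarrow> bval bb m \<noteq> None"
  and "\<And>i m. I i m \<Longrightarrow> bval bb m = Some True \<Longrightarrow> i < K"
  shows "hT (I 0) (While bb c) (\<lambda>m. \<exists>i. I i m \<and> bval bb m = Some False) ((K+1)*(Tb + bcost bb + 1))"
  unfolding hT_def
proof (intro allI impI)
  fix m assume "I 0 m"
  have b: "\<And>i m. I i m \<Longrightarrow> bval bb m = Some True \<Longrightarrow> wpT c (I (Suc i)) m Tb"
    using assms(1) unfolding hT_def by blast
  show "wpT (While bb c) (\<lambda>m. \<exists>i. I i m \<and> bval bb m = Some False) m ((K + 1) * (Tb + bcost bb + 1))"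
    using while_aux[of I bb c Tb K 0 K m, OF b assms(2) assms(3)] \<open>I 0 m\<close> by simp
qed

lemma aval_Rd_nat: "aval e m = Some (real j) \<Longrightarrow> aval (Rd e) m = Some (m j)"
  by simp

lemma test: "m (7::nat) = real (k::nat) \<Longrightarrow> aval (Add (Rd (N 7)) (N 1)) m = Some (real (k+1))"
  by simp


definition "nE = Rd (N 0)"
definition "varA i = Add (N (int (5+i))) (Mul (N 3) (Mul nE nE))"
definition Vn :: "nat \<Rightarrow> nat \<Rightarrow> nat" where "Vn n i = 5 + 3*n*n + i"
definition "vr i = Rd (varA i)"
definition "tblAe oe ke ve = Add (Add (Add (N 21) oe) (Mul (N 3) (Mul nE nE))) (Mul (N 8) (Add (Mul ke nE) ve))"
definition "tblA off = tblAe (N (int off))"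
definition "inA r ue ve = Add (N (int (5+r))) (Mul (N 3) (Add (Mul ue nE) ve))"

definition Bn :: "nat \<Rightarrow> nat" where "Bn n = 5 + 3*n*n"
definition An :: "nat \<Rightarrow> nat \<Rightarrow> nat \<Rightarrow> nat \<Rightarrow> nat" where "An n off k v = Bn n + 16 + 8*(k*n+v) + off"

lemma aval_nE[simp]: "m 0 = real n \<Longrightarrow> aval nE m = Some (real n)"
  by (simp add: nE_def)

lemma aval_varA[simp]: "m 0 = real n \<Longrightarrow> aval (varA i) m = Some (real (Vn n i))"
  by (simp add: varA_def Vn_def)

lemma aval_vr[simp]: "m 0 = real n \<Longrightarrow> aval (vr i) m = Some (m (Vn n i))"
  unfolding vr_def by (rule aval_Rd_nat[OF aval_varA])

lemma aval_tblAe: "m 0 = real n \<Longrightarrow> aval oe m = Some (real off) \<Longrightarrow> aval ke m = Some (real k) \<Longrightarrow> aval ve m = Some (real v)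
  \<Longrightarrow> aval (tblAe oe ke ve) m = Some (real (An n off k v))"
  by (simp add: tblAe_def An_def Bn_def algebra_simps)

lemma aval_Rd_tblAe: "m 0 = real n \<Longrightarrow> aval oe m = Some (real off) \<Longrightarrow> aval ke m = Some (real k) \<Longrightarrow> aval ve m = Some (real v)
  \<Longrightarrow> aval (Rd (tblAe oe ke ve)) m = Some (m (An n off k v))"
  by (rule aval_Rd_nat, rule aval_tblAe)

definition Ed :: "nat \<Rightarrow> nat \<Rightarrow> nat \<Rightarrow> nat \<Rightarrow> nat" where "Ed n u v r = 5 + 3*(u*n+v) + r"

lemma aval_Rd_tblA[simp]: "m 0 = real n \<Longrightarrow> aval ke m = Some (real k) \<Longrightarrow> aval ve m = Some (real v)
  \<Longrightarrow> aval (Rd (tblA off ke ve)) m = Some (m (An n off k v))"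
  unfolding tblA_def by (rule aval_Rd_tblAe) simp_all
lemma aval_tblA[simp]: "m 0 = real n \<Longrightarrow> aval ke m = Some (real k) \<Longrightarrow> aval ve m = Some (real v)
  \<Longrightarrow> aval (tblA off ke ve) m = Some (real (An n off k v))"
  unfolding tblA_def by (rule aval_tblAe) simp_all

lemma aval_N_nat[simp]: "aval (N (int k)) m = Some (real k)" by simp
lemma aval_N_num[simp]: "aval (N (numeral k)) m = Some (real (numeral k))" by simp
lemma aval_N_0[simp]: "aval (N 0) m = Some (real 0)" by simp
lemma aval_N_1[simp]: "aval (N 1) m = Some (real 1)" by simp

lemma aval_inA[simp]: "m 0 = real n \<Longrightarrow> aval ue m = Some (real u) \<Longrightarrow> aval ve m = Some (real v)
  \<Longrightarrow> aval (Rd (inA r ue ve)) m = Some (m (Ed n u v r))"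
proof -
  assume a: "m 0 = real n" "aval ue m = Some (real u)" "aval ve m = Some (real v)"
  have "aval (inA r ue ve) m = Some (real (Ed n u v r))"
    using a by (simp add: inA_def Ed_def algebra_simps)
  then show ?thesis by (rule aval_Rd_nat)
qed

definition "offE c i = Add (N (int c)) (Mul (N 3) (vr i))"
lemma aval_offE[simp]: "m 0 = real n \<Longrightarrow> m (Vn n i) = real w \<Longrightarrow> aval (offE c i) m = Some (real (c + 3*w))"
  by (simp add: offE_def)


lemma aval_Rd_tblAe_offE[simp]: "m 0 = real n \<Longrightarrow> m (Vn n i) = real w \<Longrightarrow> aval ke m = Some (real k) \<Longrightarrow> aval ve m = Some (real v)
  \<Longrightarrow> aval (Rd (tblAe (offE c i) ke ve)) m = Some (m (An n (c+3*w) k v))"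
  by (rule aval_Rd_tblAe[OF _ aval_offE])

lemma An_eq_iff[simp]: "off < 8 \<Longrightarrow> off' < 8 \<Longrightarrow> v < n \<Longrightarrow> v' < n \<Longrightarrow>
  (An n off k v = An n off' k' v') = (off = off' \<and> k = k' \<and> v = v')"
proof
  assume a: "off < 8" "off' < 8" "v < n" "v' < n" and e: "An n off k v = An n off' k' v'"
  then have e1: "8*(k*n+v)+off = 8*(k'*n+v')+off'" by (simp add: An_def)
  have ar: "\<And>X Y::nat. 8*X+off = 8*Y+off' \<Longrightarrow> off = off'" using a by presburger
  have "off = off'" using ar[OF e1] .
  with e1 have e2: "k*n+v = k'*n+v'" by simp
  then have "(k*n+v) mod n = (k'*n+v') mod n" by simp
  then have "v = v'" using a by simp
  with e2 have "k*n = k'*n" by simp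
  then have "k = k'" using a by simp
  then show "off = off' \<and> k = k' \<and> v = v'" using \<open>off = off'\<close> \<open>v = v'\<close> by simp
qed simp

lemma Vn_eq_iff[simp]: "(Vn n i = Vn n j) = (i = j)" by (simp add: Vn_def)
lemma Vn_An[simp]: "i < 16 \<Longrightarrow> Vn n i \<noteq> An n off k v" "i < 16 \<Longrightarrow> An n off k v \<noteq> Vn n i"
  by (auto simp: Vn_def An_def Bn_def)
lemma Vn_small[simp]: "j < 5 \<Longrightarrow> Vn n i \<noteq> j" "j < 5 \<Longrightarrow> j \<noteq> Vn n i"
  by (auto simp: Vn_def)
lemma An_small[simp]: "j < 5 \<Longrightarrow> An n off k v \<noteq> j" "j < 5 \<Longrightarrow> j \<noteq> An n off k v"
  by (auto simp: An_def Bn_def)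

lemma Ed_lt: "u < n \<Longrightarrow> v < n \<Longrightarrow> r < 3 \<Longrightarrow> Ed n u v r < Bn n"
proof -
  assume a: "u < n" "v < n" "r < 3"
  have "u*n+v < n*n"
  proof -
    have "u*n + v < u*n + n" using a by simp
    also have "\<dots> = (u+1)*n" by simp
    also have "\<dots> \<le> n*n" using a by (intro mult_right_mono) auto
    finally show ?thesis .
  qed
  then have "u*n+v+1 \<le> n*n" by simp
  then have "3*(u*n+v)+3 \<le> 3*(n*n)" by simp
  then show ?thesis using a by (simp add: Ed_def Bn_def)
qed

lemma Ed_Vn[simp]: "u < n \<Longrightarrow> v < n \<Longrightarrow> r < 3 \<Longrightarrow> Vn n i \<noteq> Ed n u v r"
   "u < n \<Longrightarrow> v < n \<Longrightarrow> r < 3 \<Longrightarrow> Ed n u v r \<noteq> Vn n i"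
  using Ed_lt[of u n v r] by (auto simp: Vn_def Bn_def)
lemma Ed_An[simp]: "u < n \<Longrightarrow> v < n \<Longrightarrow> r < 3 \<Longrightarrow> An n off k w \<noteq> Ed n u v r"
   "u < n \<Longrightarrow> v < n \<Longrightarrow> r < 3 \<Longrightarrow> Ed n u v r \<noteq> An n off k w"
  using Ed_lt[of u n v r] by (auto simp: An_def Bn_def)

lemma An_layer: "off < 8 \<Longrightarrow> v < n \<Longrightarrow> An n 0 k 0 \<le> An n off k v \<and> An n off k v < An n 0 (Suc k) 0"
  by (simp add: An_def)


lemma aval_Rd_N0[simp]: "aval (Rd (N 0)) m = Some (m 0)" by simp
lemma aval_Rd_N1[simp]: "aval (Rd (N 1)) m = Some (m 1)" by simp
lemma aval_Rd_Nnum[simp]: "aval (Rd (N (numeral k))) m = Some (m (numeral k))"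
proof -
  have "aval (N (numeral k)) m = Some (real (numeral k))" by simp
  then show ?thesis by (rule aval_Rd_nat)
qed
declare aval.simps(2)[simp del]

definition "asg i e = Assign (varA i) e"
definition "inc i = asg i (Add (vr i) (N 1))"
definition "isZ e = BNot (Less (N 0) e)"
definition "Orb b1 b2 = BNot (BAnd (BNot b1) (BNot b2))"
definition "kE = vr 0"
definition "vE = vr 1"
definition "uE = vr 2"
definition "kmE = Sub (vr 0) (N 1)"

lemma bval_isZ[simp]: "aval e m = Some x \<Longrightarrow> bval (isZ e) m = Some (\<not> 0 < x)"
  by (simp add: isZ_def)
lemma bval_Orb[simp]: "bval b1 m = Some x \<Longrightarrow> bval b2 m = Some y \<Longrightarrow> bval (Orb b1 b2) m = Some (x \<or> y)"
  by (simp add: Orb_def)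

definition relax :: "nat \<Rightarrow> com" where
 "relax w =
  Seq (asg 7 (Add (Mul (Rd (inA 1 uE vE)) (Rd (tblA (1+3*w) kmE uE))) (Rd (inA 2 uE vE))))
 (Seq (If (Orb (isZ (Rd (tblA 0 kE vE))) (Less (Rd (tblA 1 kE vE)) (vr 7)))
         (Seq (Assign (tblA 1 kE vE) (vr 7)) (Seq (Assign (tblA 2 kE vE) uE) (Assign (tblA 3 kE vE) (N (int w))))) SKIP)
 (Seq (If (Orb (isZ (Rd (tblA 0 kE vE))) (Less (vr 7) (Rd (tblA 4 kE vE))))
         (Seq (Assign (tblA 4 kE vE) (vr 7)) (Seq (Assign (tblA 5 kE vE) uE) (Assign (tblA 6 kE vE) (N (int w))))) SKIP)
  (Assign (tblA 0 kE vE) (N 1))))"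

definition cnd :: "nat \<Rightarrow> (nat \<Rightarrow> nat \<Rightarrow> real) \<Rightarrow> (nat \<Rightarrow> nat \<Rightarrow> real) \<Rightarrow> mem \<Rightarrow> nat \<Rightarrow> nat \<Rightarrow> nat \<Rightarrow> nat \<Rightarrow> real" where
  "cnd n a b mp kp u v f = a u v * mp (An n (1+3*f) kp u) + b u v"

definition ptr1 :: "nat \<Rightarrow> (nat \<times> nat) set \<Rightarrow> (nat \<Rightarrow> nat \<Rightarrow> real) \<Rightarrow> (nat \<Rightarrow> nat \<Rightarrow> real) \<Rightarrow> mem \<Rightarrow> nat \<Rightarrow> nat \<Rightarrow> nat
   \<Rightarrow> nat \<Rightarrow> nat \<Rightarrow> nat \<Rightarrow> mem \<Rightarrow> bool" where
  "ptr1 n E a b mp kp k v o1 o2 o3 m \<longleftrightarrow> (\<exists>u f. u < n \<and> f \<le> 1 \<and> m (An n o2 k v) = real u \<and> m (An n o3 k v) = real f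
     \<and> (u,v) \<in> E \<and> mp (An n 0 kp u) = 1 \<and> m (An n o1 k v) = cnd n a b mp kp u v f)"

definition PC :: "nat \<Rightarrow> (nat \<times> nat) set \<Rightarrow> (nat \<Rightarrow> nat \<Rightarrow> real) \<Rightarrow> (nat \<Rightarrow> nat \<Rightarrow> real) \<Rightarrow> mem \<Rightarrow> nat \<Rightarrow> nat \<Rightarrow> nat
   \<Rightarrow> (nat \<times> nat) set \<Rightarrow> mem \<Rightarrow> bool" where
  "PC n E a b mp kp k v S m \<longleftrightarrow> (m (An n 0 k v) = 0 \<or> m (An n 0 k v) = 1) \<and> (m (An n 0 k v) = 1 \<longleftrightarrow> S \<noteq> {})
    \<and> (m (An n 0 k v) = 1 \<longrightarrow> ptr1 n E a b mp kp k v 1 2 3 m \<and> ptr1 n E a b mp kp k v 4 5 6 m)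
    \<and> (\<forall>(u',f)\<in>S. m (An n 4 k v) \<le> cnd n a b mp kp u' v f \<and> cnd n a b mp kp u' v f \<le> m (An n 1 k v))"

definition Wuv :: "nat \<Rightarrow> nat \<Rightarrow> nat \<Rightarrow> nat set" where
  "Wuv n k v = insert (Vn n 7) ((\<lambda>q. An n q k v) ` {..<8})"

lemma Wuv_mem[simp]: "Vn n 7 \<in> Wuv n k v" "q < 8 \<Longrightarrow> An n q k v \<in> Wuv n k v"
  by (auto simp: Wuv_def)

lemma PC_step:
  assumes pc: "PC n E a b mp kp k v S m" and un: "u < n" and w: "w \<le> 1" and e: "(u,v) \<in> E"
  and rp: "mp (An n 0 kp u) = 1" and vn: "v < n"
  and c: "c = a u v * mp (An n (1+3*w) kp u) + b u v"
  and r: "m' (An n 0 k v) = 1"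
  and hi: "if \<not> 0 < m (An n 0 k v) \<or> m (An n 1 k v) < c then m' (An n 1 k v) = c \<and> m' (An n 2 k v) = real u \<and> m' (An n 3 k v) = real w
     else m' (An n 1 k v) = m (An n 1 k v) \<and> m' (An n 2 k v) = m (An n 2 k v) \<and> m' (An n 3 k v) = m (An n 3 k v)"
  and lo: "if \<not> 0 < m (An n 0 k v) \<or> c < m (An n 4 k v) then m' (An n 4 k v) = c \<and> m' (An n 5 k v) = real u \<and> m' (An n 6 k v) = real w
     else m' (An n 4 k v) = m (An n 4 k v) \<and> m' (An n 5 k v) = m (An n 5 k v) \<and> m' (An n 6 k v) = m (An n 6 k v)"
  shows "PC n E a b mp kp k v (insert (u,w) S) m'"
proof -
  have cc: "c = cnd n a b mp kp u v w" using c by (simp add: cnd_def)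
  have p1: "ptr1 n E a b mp kp k v 1 2 3 m'" if "\<not> 0 < m (An n 0 k v) \<or> m (An n 1 k v) < c"
    unfolding ptr1_def using that hi un w e rp cc by (intro exI[of _ u] exI[of _ w]) auto
  have p4: "ptr1 n E a b mp kp k v 4 5 6 m'" if "\<not> 0 < m (An n 0 k v) \<or> c < m (An n 4 k v)"
    unfolding ptr1_def using that lo un w e rp cc by (intro exI[of _ u] exI[of _ w]) auto
  show ?thesis
  proof (cases "m (An n 0 k v) = 1")
    case False
    then have r0: "m (An n 0 k v) = 0" "S = {}" using pc unfolding PC_def by auto
    then show ?thesis using p1 p4 hi lo r unfolding PC_def by (simp add: cc)
  next
    case True
    then have S: "S \<noteq> {}" and o1: "ptr1 n E a b mp kp k v 1 2 3 m" "ptr1 n E a b mp kp k v 4 5 6 m"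
      and bd: "\<forall>(u',f)\<in>S. m (An n 4 k v) \<le> cnd n a b mp kp u' v f \<and> cnd n a b mp kp u' v f \<le> m (An n 1 k v)"
      using pc unfolding PC_def by auto
    have q1: "ptr1 n E a b mp kp k v 1 2 3 m'"
    proof (cases "m (An n 1 k v) < c")
      case True then show ?thesis using p1 by simp
    next
      case False then show ?thesis using o1(1) hi \<open>m (An n 0 k v) = 1\<close> unfolding ptr1_def by auto
    qed
    have q4: "ptr1 n E a b mp kp k v 4 5 6 m'"
    proof (cases "c < m (An n 4 k v)")
      case True then show ?thesis using p4 by simp
    next
      case False then show ?thesis using o1(2) lo \<open>m (An n 0 k v) = 1\<close> unfolding ptr1_def by auto
    qed
    have h1: "m (An n 1 k v) \<le> m' (An n 1 k v)" "c \<le> m' (An n 1 k v)"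
      using hi \<open>m (An n 0 k v) = 1\<close> by (auto split: if_splits)
    have h4: "m' (An n 4 k v) \<le> m (An n 4 k v)" "m' (An n 4 k v) \<le> c"
      using lo \<open>m (An n 0 k v) = 1\<close> by (auto split: if_splits)
    have "\<forall>(u',f)\<in>insert (u,w) S. m' (An n 4 k v) \<le> cnd n a b mp kp u' v f \<and> cnd n a b mp kp u' v f \<le> m' (An n 1 k v)"
      using bd h1 h4 cc by fastforce
    then show ?thesis using q1 q4 r unfolding PC_def by simp
  qed
qed

lemma wp_if2: "bval bb m \<noteq> None \<Longrightarrow> (\<And>bv. bval bb m = Some bv \<Longrightarrow> bv \<Longrightarrow> wpT c1 Q m (tmax c1))
  \<Longrightarrow> (\<And>bv. bval bb m = Some bv \<Longrightarrow> \<not> bv \<Longrightarrow> wpT c2 Q m (tmax c2))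
  \<Longrightarrow> wpT (If bb c1 c2) Q m (tmax (If bb c1 c2))"
proof -
  assume h: "bval bb m \<noteq> None" "\<And>bv. bval bb m = Some bv \<Longrightarrow> bv \<Longrightarrow> wpT c1 Q m (tmax c1)"
    "\<And>bv. bval bb m = Some bv \<Longrightarrow> \<not> bv \<Longrightarrow> wpT c2 Q m (tmax c2)"
  then obtain bv where b: "bval bb m = Some bv" by blast
  show ?thesis by (rule wp_if[OF b]) (use h b in blast)+
qed

lemma relax_wp:
  assumes m0: "m 0 = real n" and mk: "m (Vn n 0) = real k" and kp: "real k - 1 = real kp"
  and mv: "m (Vn n 1) = real v" and mu: "m (Vn n 2) = real u"
  and vn: "v < n" and un: "u < n" and w: "w \<le> 1" and e: "(u,v) \<in> E"
  and ed: "m (Ed n u v 1) = a u v" "m (Ed n u v 2) = b u v"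
  and rp: "mp (An n 0 kp u) = 1" and vp: "m (An n (1+3*w) kp u) = mp (An n (1+3*w) kp u)"
  and pc: "PC n E a b mp kp k v S m"
  shows "wpT (relax w) (\<lambda>m'. PC n E a b mp kp k v (insert (u,w) S) m' \<and> (\<forall>j. j \<notin> Wuv n k v \<longrightarrow> m' j = m j)) m (tmax (relax w))"
  unfolding relax_def asg_def kE_def vE_def uE_def kmE_def
  apply (insert assms)
  apply (rule wp_seq wp_assign wp_if2 wp_skip conjI[OF PC_step[OF pc un w e rp vn]] | simp)+
  done


lemma Wuv_small[simp]: "j < 5 \<Longrightarrow> j \<notin> Wuv n k v" by (auto simp: Wuv_def An_def Bn_def)
lemma Vn_Wuv[simp]: "i < 16 \<Longrightarrow> (Vn n i \<in> Wuv n k v) = (i = 7)" by (auto simp: Wuv_def)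
lemma Ed_Wuv[simp]: "u < n \<Longrightarrow> v < n \<Longrightarrow> r < 3 \<Longrightarrow> Ed n u v r \<notin> Wuv n k v'" by (auto simp: Wuv_def)
lemma An_Wuv[simp]: "q < 8 \<Longrightarrow> v' < n \<Longrightarrow> v < n \<Longrightarrow> (An n q k' v' \<in> Wuv n k v) = (k' = k \<and> v' = v)"
  by (auto simp: Wuv_def)

lemma PC_cong: assumes "\<And>q. q < 8 \<Longrightarrow> m1 (An n q k v) = m2 (An n q k v)"
  shows "PC n E a b mp kp k v S m1 = PC n E a b mp kp k v S m2"
  using assms[of 0] assms[of 1] assms[of 2] assms[of 3] assms[of 4] assms[of 5] assms[of 6]
  unfolding PC_def ptr1_def by simp

definition "ubody = Seq (If (BAnd (Less (N 0) (Rd (inA 0 uE vE))) (Less (N 0) (Rd (tblA 0 kmE uE)))) (Seq (relax 0) (relax 1)) SKIP) (inc 2)"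
definition "uloop = While (Less uE nE) ubody"

definition Su :: "nat \<Rightarrow> (nat \<times> nat) set \<Rightarrow> mem \<Rightarrow> nat \<Rightarrow> nat \<Rightarrow> nat \<Rightarrow> (nat \<times> nat) set" where
  "Su n E mp kp v i = {(u',f). u' < i \<and> (u',v) \<in> E \<and> mp (An n 0 kp u') = 1 \<and> f \<le> 1}"

definition UI :: "nat \<Rightarrow> (nat \<times> nat) set \<Rightarrow> (nat \<Rightarrow> nat \<Rightarrow> real) \<Rightarrow> (nat \<Rightarrow> nat \<Rightarrow> real) \<Rightarrow> mem \<Rightarrow> mem \<Rightarrow> nat \<Rightarrow> nat \<Rightarrow> nat
   \<Rightarrow> nat \<Rightarrow> mem \<Rightarrow> bool" where
  "UI n E a b mv mp kp k v i m \<longleftrightarrow> (\<forall>j. j \<notin> insert (Vn n 2) (Wuv n k v) \<longrightarrow> m j = mv j) \<and> m (Vn n 2) = real i \<and> i \<le> n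
     \<and> PC n E a b mp kp k v (Su n E mp kp v i) m"

definition UH :: "nat \<Rightarrow> (nat \<times> nat) set \<Rightarrow> (nat \<Rightarrow> nat \<Rightarrow> real) \<Rightarrow> (nat \<Rightarrow> nat \<Rightarrow> real) \<Rightarrow> mem \<Rightarrow> mem \<Rightarrow> nat \<Rightarrow> nat \<Rightarrow> nat
   \<Rightarrow> bool" where
  "UH n E a b mv mp kp k v \<longleftrightarrow> mv 0 = real n \<and> mv (Vn n 0) = real k \<and> real k - 1 = real kp \<and> kp \<noteq> k \<and> mv (Vn n 1) = real v \<and> v < n
    \<and> (\<forall>u<n. mv (Ed n u v 0) = (if (u,v) \<in> E then 1 else 0) \<and> ((u,v) \<in> E \<longrightarrow> mv (Ed n u v 1) = a u v \<and> mv (Ed n u v 2) = b u v))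
    \<and> (\<forall>u<n. \<forall>q<8. mv (An n q kp u) = mp (An n q kp u))
    \<and> (\<forall>u<n. mp (An n 0 kp u) = 0 \<or> mp (An n 0 kp u) = 1)"

lemma UH_facts:
  assumes uh: "UH n E a b mv mp kp k v" and fr: "\<forall>j. j \<notin> insert (Vn n 2) (Wuv n k v) \<longrightarrow> m j = mv j"
  shows "m 0 = real n" "m (Vn n 0) = real k" "m (Vn n 1) = real v"
    "\<And>u. u < n \<Longrightarrow> m (Ed n u v 0) = (if (u,v) \<in> E then 1 else 0)"
    "\<And>u. u < n \<Longrightarrow> (u,v) \<in> E \<Longrightarrow> m (Ed n u v 1) = a u v"
    "\<And>u. u < n \<Longrightarrow> (u,v) \<in> E \<Longrightarrow> m (Ed n u v 2) = b u v"
    "\<And>u q. u < n \<Longrightarrow> q < 8 \<Longrightarrow> m (An n q kp u) = mp (An n q kp u)"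
proof -
  have vn: "v < n" and kp: "kp \<noteq> k" using uh by (auto simp: UH_def)
  show "m 0 = real n" "m (Vn n 0) = real k" "m (Vn n 1) = real v" using uh fr by (auto simp: UH_def)
  show "\<And>u. u < n \<Longrightarrow> m (Ed n u v 0) = (if (u,v) \<in> E then 1 else 0)"
    "\<And>u. u < n \<Longrightarrow> (u,v) \<in> E \<Longrightarrow> m (Ed n u v 1) = a u v"
    "\<And>u. u < n \<Longrightarrow> (u,v) \<in> E \<Longrightarrow> m (Ed n u v 2) = b u v"
    using uh fr vn by (auto simp: UH_def)
  show "\<And>u q. u < n \<Longrightarrow> q < 8 \<Longrightarrow> m (An n q kp u) = mp (An n q kp u)"
  proof -
    fix u q :: nat assume "u < n" "q < 8"
    then have "An n q kp u \<notin> insert (Vn n 2) (Wuv n k v)" using vn kp by simp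
    then show "m (An n q kp u) = mp (An n q kp u)" using fr uh \<open>u < n\<close> \<open>q < 8\<close> by (auto simp: UH_def)
  qed
qed

lemma ubody_wp:
  assumes uh: "UH n E a b mv mp kp k v" and ui: "UI n E a b mv mp kp k v i m" and iN: "i < n"
  shows "wpT ubody (UI n E a b mv mp kp k v (Suc i)) m (tmax ubody)"
proof -
  have vn: "v < n" and kp: "kp \<noteq> k" "real k - 1 = real kp" and rp01: "\<forall>u<n. mp (An n 0 kp u) = 0 \<or> mp (An n 0 kp u) = 1"
    using uh by (auto simp: UH_def)
  have fr: "\<forall>j. j \<notin> insert (Vn n 2) (Wuv n k v) \<longrightarrow> m j = mv j" and mi: "m (Vn n 2) = real i"
    and pc: "PC n E a b mp kp k v (Su n E mp kp v i) m" using ui by (auto simp: UI_def)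
  note F = UH_facts[OF uh fr]
  define Q' where "Q' = (\<lambda>m'. wpT (inc 2) (UI n E a b mv mp kp k v (Suc i)) m' (tmax (inc 2)))"
  have post: "Q' m'" if f1: "\<forall>j. j \<notin> Wuv n k v \<longrightarrow> m' j = m j" and p1: "PC n E a b mp kp k v (Su n E mp kp v (Suc i)) m'" for m'
  proof -
    have m'0: "m' 0 = real n" "m' (Vn n 2) = real i" using f1 F(1) mi by auto
    have fr': "\<forall>j. j \<notin> insert (Vn n 2) (Wuv n k v) \<longrightarrow> (m'(Vn n 2 := real i + 1)) j = mv j"
      using f1 fr by auto
    have pc': "PC n E a b mp kp k v (Su n E mp kp v (Suc i)) (m'(Vn n 2 := real i + 1))"
    proof -
      have "PC n E a b mp kp k v (Su n E mp kp v (Suc i)) (m'(Vn n 2 := real i + 1)) = PC n E a b mp kp k v (Su n E mp kp v (Suc i)) m'"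
        by (rule PC_cong) simp
      then show ?thesis using p1 by simp
    qed
    show ?thesis unfolding Q'_def inc_def asg_def
      apply (rule wp_assign)
        apply (simp add: m'0)
       apply (simp add: m'0)
      using fr' pc' iN unfolding UI_def by simp
  qed
  show ?thesis
    unfolding ubody_def
  proof (rule wp_seq, rule wp_if2)
    show "bval (BAnd (Less (N 0) (Rd (inA 0 uE vE))) (Less (N 0) (Rd (tblA 0 kmE uE)))) m \<noteq> None"
      using F(1-3) mi kp by (simp add: uE_def vE_def kmE_def)
  next
    fix bv assume bv: "bval (BAnd (Less (N 0) (Rd (inA 0 uE vE))) (Less (N 0) (Rd (tblA 0 kmE uE)))) m = Some bv" and "\<not> bv"
    have "bv = ((i,v) \<in> E \<and> mp (An n 0 kp i) = 1)"
      using bv F(1-3) F(4)[OF iN] F(7)[OF iN, of 0] mi kp rp01 iN by (auto simp: uE_def vE_def kmE_def split: if_splits)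
    then have "Su n E mp kp v (Suc i) = Su n E mp kp v i" using \<open>\<not> bv\<close> by (auto simp: Su_def less_Suc_eq)
    then show "wpT SKIP (\<lambda>m'. wpT (inc 2) (UI n E a b mv mp kp k v (Suc i)) m' (tmax (inc 2))) m (tmax SKIP)"
      using post[of m] pc by (intro wp_skip) (simp add: Q'_def)
  next
    fix bv assume bv: "bval (BAnd (Less (N 0) (Rd (inA 0 uE vE))) (Less (N 0) (Rd (tblA 0 kmE uE)))) m = Some bv" and "bv"
    have "bv = ((i,v) \<in> E \<and> mp (An n 0 kp i) = 1)"
      using bv F(1-3) F(4)[OF iN] F(7)[OF iN, of 0] mi kp rp01 iN by (auto simp: uE_def vE_def kmE_def split: if_splits)
    then have c: "(i,v) \<in> E" "mp (An n 0 kp i) = 1" using \<open>bv\<close> by auto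
    then have S: "Su n E mp kp v (Suc i) = insert (i,1) (insert (i,0) (Su n E mp kp v i))"
      by (auto simp: Su_def less_Suc_eq)
    have r0: "wpT (relax 0) (\<lambda>m'. PC n E a b mp kp k v (insert (i,0) (Su n E mp kp v i)) m' \<and> (\<forall>j. j \<notin> Wuv n k v \<longrightarrow> m' j = m j)) m (tmax (relax 0))"
      by (rule relax_wp) (use F mi kp vn iN c pc in auto)
    show "wpT (Seq (relax 0) (relax 1)) (\<lambda>m'. wpT (inc 2) (UI n E a b mv mp kp k v (Suc i)) m' (tmax (inc 2))) m (tmax (Seq (relax 0) (relax 1)))"
    proof (rule wp_seq, rule wp_post[OF r0], elim conjE)
      fix m1 assume p1: "PC n E a b mp kp k v (insert (i,0) (Su n E mp kp v i)) m1" and f1: "\<forall>j. j \<notin> Wuv n k v \<longrightarrow> m1 j = m j"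
      have fr1: "\<forall>j. j \<notin> insert (Vn n 2) (Wuv n k v) \<longrightarrow> m1 j = mv j" using f1 fr by auto
      note F1 = UH_facts[OF uh fr1]
      have m1i: "m1 (Vn n 2) = real i" using f1 mi by simp
      have r1: "wpT (relax 1) (\<lambda>m'. PC n E a b mp kp k v (insert (i,1) (insert (i,0) (Su n E mp kp v i))) m' \<and> (\<forall>j. j \<notin> Wuv n k v \<longrightarrow> m' j = m1 j)) m1 (tmax (relax 1))"
        by (rule relax_wp) (use F1 m1i kp vn iN c p1 in auto)
      show "wpT (relax 1) (\<lambda>m'. wpT (inc 2) (UI n E a b mv mp kp k v (Suc i)) m' (tmax (inc 2))) m1 (tmax (relax 1))"
        apply (rule wp_post[OF r1])
        using post f1 S unfolding Q'_def by auto
    qed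
  qed
qed

lemma uloop_hT:
  assumes uh: "UH n E a b mv mp kp k v"
  shows "hT (UI n E a b mv mp kp k v 0) uloop (UI n E a b mv mp kp k v n) ((n+1)*(tmax ubody + bcost (Less uE nE) + 1))"
proof -
  have m0: "m 0 = real n" if "UI n E a b mv mp kp k v i m" for i m
    using UH_facts(1)[OF uh] that unfolding UI_def by blast
  have bv: "bval (Less uE nE) m = Some (i < n)" if "UI n E a b mv mp kp k v i m" for i m
    using m0[OF that] that by (simp add: UI_def uE_def)
  have "hT (UI n E a b mv mp kp k v 0) (While (Less uE nE) ubody)
     (\<lambda>m. \<exists>i. UI n E a b mv mp kp k v i m \<and> bval (Less uE nE) m = Some False) ((n+1)*(tmax ubody + bcost (Less uE nE) + 1))"
  proof (rule hT_while)
    fix i show "hT (\<lambda>m. UI n E a b mv mp kp k v i m \<and> bval (Less uE nE) m = Some True) ubody (UI n E a b mv mp kp k v (Suc i)) (tmax ubody)"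
      unfolding hT_def using ubody_wp[OF uh] bv by auto
  next
    fix i m assume "UI n E a b mv mp kp k v i m" then show "bval (Less uE nE) m \<noteq> None" using bv by simp
  next
    fix i m assume "UI n E a b mv mp kp k v i m" "bval (Less uE nE) m = Some True" then show "i < n" using bv by simp
  qed
  then show ?thesis unfolding uloop_def
    by (rule hT_conseq) (use bv in \<open>auto simp: UI_def\<close>)
qed


lemma path_apply_snoc:
  "path_apply a b (p @ [w]) x = (if p = [] then x else a (last p) w * path_apply a b p x + b (last p) w)"
proof (induction p arbitrary: x rule: induct_list012)
  case 1 then show ?case by simp
next
  case (2 u) then show ?case by simp
next
  case (3 u v zs)
  then show ?case by simp
qed

locale gpp =
  fixes n :: nat and E :: "(nat \<times> nat) set" and a b :: "nat \<Rightarrow> nat \<Rightarrow> real" and L x0 :: real and s t :: nat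
  assumes inst: "scalar_gpp_instance n E s t"
begin

abbreviation "enc \<equiv> encode_input n E a b L x0 s t"

definition "chain p \<longleftrightarrow> (\<forall>i. Suc i < length p \<longrightarrow> (p!i, p!Suc i) \<in> E)"
definition "kpath j v p \<longleftrightarrow> length p = Suc j \<and> hd p = s \<and> last p = v \<and> chain p"
abbreviation "pv p \<equiv> path_apply a b p x0"

lemma E_bound: "(u,v) \<in> E \<Longrightarrow> u < n \<and> v < n"
  using inst unfolding scalar_gpp_instance_def by auto
lemma s_bound: "s < n" "t < n" "s \<noteq> t" and acyc: "acyclic E"
  using inst unfolding scalar_gpp_instance_def by auto

lemma kpath0: "kpath 0 v p \<Longrightarrow> p = [s] \<and> v = s"
  unfolding kpath_def by (cases p) auto

lemma kpath_Suc:
  assumes "kpath (Suc j) v p"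
  shows "\<exists>p' u. p = p' @ [v] \<and> kpath j u p' \<and> (u,v) \<in> E \<and> u < n \<and> v < n"
proof -
  have len: "length p = Suc (Suc j)" and h: "hd p = s" and l: "last p = v" and c: "chain p"
    using assms unfolding kpath_def by auto
  define p' where "p' = butlast p"
  have ne: "p \<noteq> []" using len by auto
  have pp: "p = p' @ [v]" using ne l unfolding p'_def by (metis append_butlast_last_id)
  have lp': "length p' = Suc j" using len unfolding p'_def by simp
  have ne': "p' \<noteq> []" using lp' by auto
  have hp': "hd p' = s" using h pp ne' by (cases p') auto
  have cp': "chain p'" unfolding chain_def
  proof (intro allI impI)
    fix i assume i: "Suc i < length p'"
    then have "Suc i < length p" using pp by simp
    then have "(p!i, p!Suc i) \<in> E" using c unfolding chain_def by blast
    then show "(p'!i, p'!Suc i) \<in> E" using i pp by (simp add: nth_append)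
  qed
  have e: "(last p', v) \<in> E"
  proof -
    have "Suc j < length p" using len by simp
    then have "(p!j, p!Suc j) \<in> E" using c unfolding chain_def by blast
    moreover have "p!j = last p'" using pp lp' ne' by (simp add: nth_append last_conv_nth)
    moreover have "p!Suc j = v" using pp lp' by (simp add: nth_append)
    ultimately show ?thesis by simp
  qed
  show ?thesis using pp e E_bound[OF e] hp' lp' cp' unfolding kpath_def by blast
qed

lemma pv_snoc: "p' \<noteq> [] \<Longrightarrow> pv (p' @ [v]) = a (last p') v * pv p' + b (last p') v"
  by (simp add: path_apply_snoc)

definition vert_ok :: "mem \<Rightarrow> mem \<Rightarrow> nat \<Rightarrow> nat \<Rightarrow> bool" where
  "vert_ok m mp j v \<longleftrightarrow> (m (An n 0 j v) = 0 \<or> m (An n 0 j v) = 1)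
    \<and> (m (An n 0 j v) = 1 \<longrightarrow> (if j = 0 then v = s \<and> m (An n 1 0 v) = x0 \<and> m (An n 4 0 v) = x0
         else ptr1 n E a b mp (j-1) j v 1 2 3 m \<and> ptr1 n E a b mp (j-1) j v 4 5 6 m))
    \<and> (\<forall>p. kpath j v p \<longrightarrow> m (An n 0 j v) = 1 \<and> m (An n 4 j v) \<le> pv p \<and> pv p \<le> m (An n 1 j v))"

definition "tables_ok m k \<longleftrightarrow> (\<forall>j<k. \<forall>v<n. vert_ok m m j v)"

lemma vert_ok_cong:
  assumes "\<And>q. q < 8 \<Longrightarrow> m1 (An n q j v) = m2 (An n q j v)"
    and "\<And>q u. q < 8 \<Longrightarrow> u < n \<Longrightarrow> mp1 (An n q (j-1) u) = mp2 (An n q (j-1) u)"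
  shows "vert_ok m1 mp1 j v = vert_ok m2 mp2 j v"
proof -
  have p: "ptr1 n E a b mp1 (j-1) j v o1 o2 o3 m1 = ptr1 n E a b mp2 (j-1) j v o1 o2 o3 m2"
    if "o1 < 8" "o2 < 8" "o3 < 8" for o1 o2 o3
  proof -
    have A: "mp1 (An n (1+3*f) (j-1) u) = mp2 (An n (1+3*f) (j-1) u) \<and> mp1 (An n 0 (j-1) u) = mp2 (An n 0 (j-1) u)"
      if "u < n" "f \<le> 1" for u f using assms(2) that by simp
    have M: "m1 (An n o1 j v) = m2 (An n o1 j v)" "m1 (An n o2 j v) = m2 (An n o2 j v)" "m1 (An n o3 j v) = m2 (An n o3 j v)"
      using assms(1) that by auto
    show ?thesis unfolding ptr1_def cnd_def
    proof (rule iffI; elim exE conjE)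
      fix u f assume h: "u < n" "f \<le> 1" "m1 (An n o2 j v) = real u" "m1 (An n o3 j v) = real f" "(u, v) \<in> E"
        "mp1 (An n 0 (j - 1) u) = 1" "m1 (An n o1 j v) = a u v * mp1 (An n (1 + 3 * f) (j - 1) u) + b u v"
      show "\<exists>u f. u < n \<and> f \<le> 1 \<and> m2 (An n o2 j v) = real u \<and> m2 (An n o3 j v) = real f \<and> (u, v) \<in> E \<and>
          mp2 (An n 0 (j - 1) u) = 1 \<and> m2 (An n o1 j v) = a u v * mp2 (An n (1 + 3 * f) (j - 1) u) + b u v"
        using h A[OF h(1,2)] M by (intro exI[of _ u] exI[of _ f]) simp
    next
      fix u f assume h: "u < n" "f \<le> 1" "m2 (An n o2 j v) = real u" "m2 (An n o3 j v) = real f" "(u, v) \<in> E"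
        "mp2 (An n 0 (j - 1) u) = 1" "m2 (An n o1 j v) = a u v * mp2 (An n (1 + 3 * f) (j - 1) u) + b u v"
      show "\<exists>u f. u < n \<and> f \<le> 1 \<and> m1 (An n o2 j v) = real u \<and> m1 (An n o3 j v) = real f \<and> (u, v) \<in> E \<and>
          mp1 (An n 0 (j - 1) u) = 1 \<and> m1 (An n o1 j v) = a u v * mp1 (An n (1 + 3 * f) (j - 1) u) + b u v"
        using h A[OF h(1,2)] M by (intro exI[of _ u] exI[of _ f]) simp
    qed
  qed
  show ?thesis
  proof (cases "j = 0")
    case True
    then show ?thesis unfolding vert_ok_def using assms(1)[of 0] assms(1)[of 1] assms(1)[of 4] by simp
  next
    case False
    then show ?thesis unfolding vert_ok_def
      using p[of 1 2 3] p[of 4 5 6] assms(1)[of 0] assms(1)[of 1] assms(1)[of 4] by simp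
  qed
qed

lemma PC_full:
  assumes k: "k = Suc kp" and tab: "\<forall>u<n. vert_ok mk mk kp u" and vn: "v < n"
    and pc: "PC n E a b mk kp k v (Su n E mk kp v n) m"
  shows "vert_ok m mk k v"
proof -
  have r01: "m (An n 0 k v) = 0 \<or> m (An n 0 k v) = 1" using pc unfolding PC_def by blast
  have ptr: "m (An n 0 k v) = 1 \<Longrightarrow> ptr1 n E a b mk kp k v 1 2 3 m \<and> ptr1 n E a b mk kp k v 4 5 6 m"
    using pc unfolding PC_def by blast
  have bd: "\<forall>(u',f)\<in>Su n E mk kp v n. m (An n 4 k v) \<le> cnd n a b mk kp u' v f \<and> cnd n a b mk kp u' v f \<le> m (An n 1 k v)"
    using pc unfolding PC_def by blast
  have rS: "m (An n 0 k v) = 1 \<longleftrightarrow> Su n E mk kp v n \<noteq> {}" using pc unfolding PC_def by blast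
  have paths: "m (An n 0 k v) = 1 \<and> m (An n 4 k v) \<le> pv p \<and> pv p \<le> m (An n 1 k v)" if kp: "kpath k v p" for p
  proof -
    obtain p' u where pp: "p = p' @ [v]" "kpath kp u p'" "(u,v) \<in> E" "u < n"
      using kpath_Suc[of kp v p] kp k by auto
    have vo: "vert_ok mk mk kp u" using tab pp(4) by simp
    then have ru: "mk (An n 0 kp u) = 1" and lo: "mk (An n 4 kp u) \<le> pv p'" and hi: "pv p' \<le> mk (An n 1 kp u)"
      using pp(2) unfolding vert_ok_def by auto
    have mem: "(u,0) \<in> Su n E mk kp v n" "(u,1) \<in> Su n E mk kp v n" using pp ru by (auto simp: Su_def)
    have ne: "p' \<noteq> []" "last p' = u" using pp(2) unfolding kpath_def by auto
    have pvp: "pv p = a u v * pv p' + b u v" using pv_snoc[OF ne(1)] pp(1) ne(2) by simp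
    have c0: "cnd n a b mk kp u v 0 = a u v * mk (An n 1 kp u) + b u v" and c1: "cnd n a b mk kp u v 1 = a u v * mk (An n 4 kp u) + b u v"
      by (simp_all add: cnd_def)
    have B0: "m (An n 4 k v) \<le> cnd n a b mk kp u v 0" "cnd n a b mk kp u v 0 \<le> m (An n 1 k v)"
      and B1: "m (An n 4 k v) \<le> cnd n a b mk kp u v 1" "cnd n a b mk kp u v 1 \<le> m (An n 1 k v)"
      using bd mem by auto
    have "min (cnd n a b mk kp u v 0) (cnd n a b mk kp u v 1) \<le> pv p \<and> pv p \<le> max (cnd n a b mk kp u v 0) (cnd n a b mk kp u v 1)"
    proof (cases "a u v \<ge> 0")
      case True
      then have "a u v * mk (An n 4 kp u) \<le> a u v * pv p'" "a u v * pv p' \<le> a u v * mk (An n 1 kp u)"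
        using lo hi by (simp_all add: mult_left_mono)
      then show ?thesis unfolding c0 c1 pvp by linarith
    next
      case False
      then have "a u v * pv p' \<le> a u v * mk (An n 4 kp u)" "a u v * mk (An n 1 kp u) \<le> a u v * pv p'"
        using lo hi by (simp_all add: mult_left_mono_neg)
      then show ?thesis unfolding c0 c1 pvp by linarith
    qed
    then show ?thesis using B0 B1 rS mem by auto
  qed
  show ?thesis unfolding vert_ok_def using r01 ptr paths k by auto
qed

end


definition "vbody = Seq (Assign (tblA 0 kE vE) (N 0)) (Seq (asg 2 (N 0)) (Seq uloop (inc 1)))"
definition "vloop = While (Less vE nE) vbody"
definition "kbody = Seq (asg 1 (N 0)) (Seq vloop (inc 0))"
definition "kloop = While (Less kE nE) kbody"
definition "UT n = (n+1)*(tmax ubody + bcost (Less uE nE) + 1)"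
definition "VT n = Suc (tmax (Assign (tblA 0 kE vE) (N 0)) + Suc (tmax (asg 2 (N 0)) + Suc (UT n + tmax (inc 1))))"

context gpp begin

lemma enc_low: "enc 0 = real n" "enc 1 = real s" "enc 2 = real t" "enc 3 = L" "enc 4 = x0"
  by (simp_all add: encode_input_def)

lemma enc_Ed: assumes "u < n" "v < n" "r < 3"
  shows "enc (Ed n u v r) = (if (u,v) \<in> E then (if r = 0 then 1 else if r = 1 then a u v else b u v) else 0)"
proof -
  define J where "J = Ed n u v r"
  have q: "(J - 5) div 3 = u*n+v" "(J - 5) mod 3 = r" using assms by (simp_all add: Ed_def J_def)
  have uv: "(u*n+v) div n = u" "(u*n+v) mod n = v" using assms by simp_all
  have lt: "u*n+v < n*n"
  proof -
    have "u*n + v < u*n + n" using assms by simp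
    also have "\<dots> = (u+1)*n" by simp
    also have "\<dots> \<le> n*n" using assms by (intro mult_right_mono) auto
    finally show ?thesis .
  qed
  have ne: "J \<noteq> 0" "J \<noteq> 1" "J \<noteq> 2" "J \<noteq> 3" "J \<noteq> 4" by (auto simp: Ed_def J_def)
  have "enc J = (if (u,v) \<in> E then (if r = 0 then 1 else if r = 1 then a u v else b u v) else 0)"
    unfolding encode_input_def Let_def using q uv lt ne by simp
  then show ?thesis by (simp add: J_def)
qed

lemma enc_high: assumes "Bn n \<le> j" shows "enc j = 0"
proof -
  have "n*n \<le> (j-5) div 3" using assms by (simp add: Bn_def)
  then show ?thesis using assms unfolding encode_input_def Let_def by (auto simp: Bn_def)
qed

lemma n2: "2 \<le> n" using s_bound by linarith

definition "Wk k = {Vn n 1, Vn n 2, Vn n 7} \<union> {An n q k v | q v. q < 8 \<and> v < n}"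
definition "inp m \<longleftrightarrow> (\<forall>j < Bn n. m j = enc j)"
definition "VH mk k kp \<longleftrightarrow> mk 0 = real n \<and> mk (Vn n 0) = real k \<and> k = Suc kp \<and> k < n \<and> inp mk \<and> (\<forall>u<n. vert_ok mk mk kp u)"
definition "VI mk k i m \<longleftrightarrow> (\<forall>j. j \<notin> Wk k \<longrightarrow> m j = mk j) \<and> m (Vn n 1) = real i \<and> i \<le> n \<and> (\<forall>v'<i. vert_ok m mk k v')"

lemma Wk_low[simp]: "j < Bn n \<Longrightarrow> j \<notin> Wk k"
  by (auto simp: Wk_def Vn_def An_def Bn_def)
lemma Wk_small[simp]: "j < 5 \<Longrightarrow> j \<notin> Wk k"
  by (auto simp: Bn_def)
lemma Wk_V[simp]: "i < 16 \<Longrightarrow> (Vn n i \<in> Wk k) = (i = 1 \<or> i = 2 \<or> i = 7)"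
  by (auto simp: Wk_def)
lemma Wk_A[simp]: "q < 8 \<Longrightarrow> u < n \<Longrightarrow> (An n q j u \<in> Wk k) = (j = k)"
  by (auto simp: Wk_def)
lemma Wk_Ed[simp]: "u < n \<Longrightarrow> v < n \<Longrightarrow> r < 3 \<Longrightarrow> Ed n u v r \<notin> Wk k"
  using Ed_lt by simp
lemma Wuv_Wk: "v < n \<Longrightarrow> x \<in> insert (Vn n 2) (Wuv n k v) \<Longrightarrow> x \<in> Wk k"
  by (auto simp: Wuv_def Wk_def)

lemma vbody_wp:
  assumes vh: "VH mk k kp" and vi: "VI mk k i m" and iN: "i < n"
  shows "wpT vbody (VI mk k (Suc i)) m (VT n)"
proof -
  have mk0: "mk 0 = real n" "mk (Vn n 0) = real k" and k: "k = Suc kp" "k < n" and inpk: "inp mk"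
    and tabk: "\<forall>u<n. vert_ok mk mk kp u" using vh unfolding VH_def by auto
  have fr: "\<forall>j. j \<notin> Wk k \<longrightarrow> m j = mk j" and mi: "m (Vn n 1) = real i" and old: "\<forall>v'<i. vert_ok m mk k v'"
    using vi unfolding VI_def by auto
  have m0: "m 0 = real n" "m (Vn n 0) = real k" using fr mk0 by auto
  define m1 where "m1 = m(An n 0 k i := 0)"
  define m2 where "m2 = m1(Vn n 2 := 0)"
  have kpk: "kp \<noteq> k" using k by simp
  have uh1: "m2 0 = real n" "m2 (Vn n 0) = real k" "m2 (Vn n 1) = real i" "real k - 1 = real kp"
    using m0 mi iN kpk k by (simp_all add: m1_def m2_def)
  have uh2: "m2 (Ed n u i 0) = (if (u, i) \<in> E then 1 else 0) \<and> ((u, i) \<in> E \<longrightarrow> m2 (Ed n u i 1) = a u i \<and> m2 (Ed n u i 2) = b u i)"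
    if u: "u < n" for u
  proof -
    have e: "m2 (Ed n u i r) = enc (Ed n u i r)" if "r < 3" for r
    proof -
      have "m2 (Ed n u i r) = m (Ed n u i r)" using u iN that by (simp add: m1_def m2_def)
      also have "\<dots> = mk (Ed n u i r)" using fr u iN that by simp
      also have "\<dots> = enc (Ed n u i r)" using inpk Ed_lt[OF u iN that] unfolding inp_def by simp
      finally show ?thesis .
    qed
    show ?thesis using e[of 0] e[of 1] e[of 2] enc_Ed[OF u iN, of 0] enc_Ed[OF u iN, of 1] enc_Ed[OF u iN, of 2] by simp
  qed
  have uh3: "mk (An n 0 kp u) = 0 \<or> mk (An n 0 kp u) = 1" if "u < n" for u using tabk that unfolding vert_ok_def by blast
  have uh4: "m2 (An n q kp u) = mk (An n q kp u)" if u: "u < n" and q: "q < 8" for u q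
  proof -
    have "m2 (An n q kp u) = m (An n q kp u)" using u q iN kpk by (simp add: m1_def m2_def)
    also have "\<dots> = mk (An n q kp u)" using fr u q kpk by simp
    finally show ?thesis .
  qed
  have uh: "UH n E a b m2 mk kp k i"
    unfolding UH_def using uh1 uh2 uh3 uh4 iN kpk by blast
  have ui0: "UI n E a b m2 mk kp k i 0 m2"
  proof -
    have "Su n E mk kp i 0 = {}" by (simp add: Su_def)
    moreover have "m2 (An n 0 k i) = 0" "m2 (Vn n 2) = 0" by (simp_all add: m1_def m2_def)
    ultimately show ?thesis unfolding UI_def PC_def by simp
  qed
  have step3: "wpT (inc 1) (VI mk k (Suc i)) m3 (tmax (inc 1))" if u3: "UI n E a b m2 mk kp k i n m3" for m3
  proof -
    have fr3: "\<forall>j. j \<notin> insert (Vn n 2) (Wuv n k i) \<longrightarrow> m3 j = m2 j" and pc3: "PC n E a b mk kp k i (Su n E mk kp i n) m3"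
      using u3 unfolding UI_def by auto
    have vo: "vert_ok m3 mk k i" by (rule PC_full[OF k(1) tabk iN pc3])
    have m30: "m3 0 = real n" "m3 (Vn n 1) = real i" using fr3 m0 mi by (simp_all add: m1_def m2_def)
    define m4 where "m4 = m3(Vn n 1 := real i + 1)"
    have fr4: "\<forall>j. j \<notin> Wk k \<longrightarrow> m4 j = mk j"
    proof (intro allI impI)
      fix j assume j: "j \<notin> Wk k"
      then have "j \<notin> insert (Vn n 2) (Wuv n k i)" using Wuv_Wk iN by blast
      then have "m4 j = m2 j" using fr3 j by (auto simp: m4_def)
      also have "\<dots> = m j" using j iN by (auto simp: m1_def m2_def)
      also have "\<dots> = mk j" using fr j by simp
      finally show "m4 j = mk j" .
    qed
    have vo4: "\<forall>v'<Suc i. vert_ok m4 mk k v'"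
    proof (intro allI impI)
      fix v' assume v': "v' < Suc i"
      show "vert_ok m4 mk k v'"
      proof (cases "v' = i")
        case True
        have "vert_ok m4 mk k i = vert_ok m3 mk k i" by (rule vert_ok_cong) (simp_all add: m4_def)
        then show ?thesis using vo True by simp
      next
        case False
        then have v'i: "v' < i" using v' by simp
        have "An n q k v' \<notin> insert (Vn n 2) (Wuv n k i)" if "q < 8" for q using that v'i iN False by simp
        then have "vert_ok m4 mk k v' = vert_ok m mk k v'"
          using fr3 v'i iN False by (intro vert_ok_cong) (simp_all add: m4_def m1_def m2_def)
        then show ?thesis using old v'i by simp
      qed
    qed
    show ?thesis unfolding inc_def asg_def
      apply (rule wp_assign)
        apply (simp add: m30)
       apply (simp add: m30)
      using fr4 vo4 iN m30 unfolding VI_def by (simp add: m4_def)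
  qed
  have l3: "wpT (Seq uloop (inc 1)) (VI mk k (Suc i)) m2 (Suc (UT n + tmax (inc 1)))"
    apply (rule wp_seq_gen)
    apply (rule wp_post[of _ "UI n E a b m2 mk kp k i n"])
    using uloop_hT[OF uh] ui0 step3 unfolding hT_def UT_def by auto
  have l2: "wpT (Seq (asg 2 (N 0)) (Seq uloop (inc 1))) (VI mk k (Suc i)) m1 (Suc (tmax (asg 2 (N 0)) + Suc (UT n + tmax (inc 1))))"
    apply (rule wp_seq_gen)
    unfolding asg_def
    apply (rule wp_assign)
      using m0 apply (simp add: m1_def)
     apply simp
    using l3 unfolding m2_def by simp
  show ?thesis unfolding vbody_def VT_def
    apply (rule wp_seq_gen)
    apply (rule wp_assign)
      using m0 mi apply (simp add: kE_def vE_def)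
     apply simp
    using l2 unfolding m1_def by simp
qed

end


definition "VLT n = (n+1)*(VT n + bcost (Less vE nE) + 1)"
definition "KT n = Suc (tmax (asg 1 (N 0)) + Suc (VLT n + tmax (inc 0)))"
definition "KLT n = (n+1)*(KT n + bcost (Less kE nE) + 1)"
definition "init = Seq (Assign (tblA 0 (N 0) (Rd (N 1))) (N 1)) (Seq (Assign (tblA 1 (N 0) (Rd (N 1))) (Rd (N 4)))
   (Seq (Assign (tblA 4 (N 0) (Rd (N 1))) (Rd (N 4))) (asg 0 (N 1))))"
definition "dp = Seq init kloop"

lemma low_ne_Vn[simp]: "j < Bn n \<Longrightarrow> Vn n i \<noteq> j" "j < Bn n \<Longrightarrow> j \<noteq> Vn n i"
  by (auto simp: Vn_def Bn_def)
lemma low_ne_An[simp]: "j < Bn n \<Longrightarrow> An n q k v \<noteq> j" "j < Bn n \<Longrightarrow> j \<noteq> An n q k v"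
  by (auto simp: An_def Bn_def)

context gpp begin

lemma vloop_hT:
  assumes vh: "VH mk k kp"
  shows "hT (VI mk k 0) vloop (VI mk k n) (VLT n)"
proof -
  have bv: "bval (Less vE nE) m = Some (i < n)" if "VI mk k i m" for i m
  proof -
    have "m 0 = real n" "m (Vn n 1) = real i" using that vh unfolding VI_def VH_def by auto
    then show ?thesis by (simp add: vE_def)
  qed
  have "hT (VI mk k 0) (While (Less vE nE) vbody)
     (\<lambda>m. \<exists>i. VI mk k i m \<and> bval (Less vE nE) m = Some False) ((n+1)*(VT n + bcost (Less vE nE) + 1))"
  proof (rule hT_while)
    fix i show "hT (\<lambda>m. VI mk k i m \<and> bval (Less vE nE) m = Some True) vbody (VI mk k (Suc i)) (VT n)"
      unfolding hT_def using vbody_wp[OF vh] bv by auto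
  next
    fix i m assume "VI mk k i m" then show "bval (Less vE nE) m \<noteq> None" using bv by simp
  next
    fix i m assume "VI mk k i m" "bval (Less vE nE) m = Some True" then show "i < n" using bv by simp
  qed
  then show ?thesis unfolding vloop_def VLT_def
    by (rule hT_conseq) (use bv in \<open>auto simp: VI_def\<close>)
qed

definition "KI i m \<longleftrightarrow> inp m \<and> m (Vn n 0) = real (Suc i) \<and> Suc i \<le> n \<and> tables_ok m (Suc i)"

lemma inp_0: "inp m \<Longrightarrow> m 0 = real n \<and> m 1 = real s \<and> m 2 = real t \<and> m 3 = L \<and> m 4 = x0"
  unfolding inp_def using enc_low by (auto simp: Bn_def)

lemma kbody_wp:
  assumes ki: "KI i m" and iN: "Suc i < n"
  shows "wpT kbody (KI (Suc i)) m (KT n)"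
proof -
  define k where "k = Suc i"
  have inpm: "inp m" and mk: "m (Vn n 0) = real k" and tab: "tables_ok m k" using ki unfolding KI_def k_def by auto
  have m0: "m 0 = real n" using inp_0[OF inpm] by simp
  define m1 where "m1 = m(Vn n 1 := 0)"
  have vh: "VH m1 k i"
    unfolding VH_def
  proof (intro conjI allI impI)
    show "m1 0 = real n" "m1 (Vn n 0) = real k" "k = Suc i" "k < n" using m0 mk iN by (simp_all add: m1_def k_def)
    show "inp m1" using inpm unfolding inp_def m1_def by (simp add: Vn_def Bn_def)
  next
    fix u assume u: "u < n"
    have "vert_ok m m i u" using tab u unfolding tables_ok_def k_def by simp
    moreover have "vert_ok m1 m1 i u = vert_ok m m i u" by (rule vert_ok_cong) (simp_all add: m1_def)
    ultimately show "vert_ok m1 m1 i u" by simp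
  qed
  have vi0: "VI m1 k 0 m1" unfolding VI_def by (simp add: m1_def)
  have step: "wpT (inc 0) (KI (Suc i)) m2 (tmax (inc 0))" if vi: "VI m1 k n m2" for m2
  proof -
    have fr: "\<forall>j. j \<notin> Wk k \<longrightarrow> m2 j = m1 j" and vo: "\<forall>v<n. vert_ok m2 m1 k v" using vi unfolding VI_def by auto
    have m20: "m2 0 = real n" "m2 (Vn n 0) = real k" using fr m0 mk by (simp_all add: m1_def)
    define m3 where "m3 = m2(Vn n 0 := real k + 1)"
    have same: "m3 (An n q j u) = m (An n q j u)" if "j \<noteq> k" "q < 8" "u < n" for j q u
      using that fr by (simp add: m3_def m1_def)
    have inp3: "inp m3" unfolding inp_def
    proof (intro allI impI)
      fix j assume j: "j < Bn n"
      then have "m3 j = m j" using fr by (simp add: m3_def m1_def)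
      then show "m3 j = enc j" using inpm j unfolding inp_def by simp
    qed
    have tab3: "tables_ok m3 (Suc k)" unfolding tables_ok_def
    proof (intro allI impI)
      fix j v assume j: "j < Suc k" and v: "v < n"
      show "vert_ok m3 m3 j v"
      proof (cases "j = k")
        case True
        have "vert_ok m3 m3 k v = vert_ok m2 m1 k v"
        proof (rule vert_ok_cong)
          fix q :: nat assume "q < 8" then show "m3 (An n q k v) = m2 (An n q k v)" by (simp add: m3_def)
        next
          fix q u :: nat assume q: "q < 8" and u: "u < n"
          have "k - 1 \<noteq> k" using k_def by simp
          then show "m3 (An n q (k - 1) u) = m1 (An n q (k - 1) u)" using fr q u by (simp add: m3_def)
        qed
        then show ?thesis using vo v True by simp
      next
        case False
        then have jk: "j < k" using j by simp
        have "vert_ok m3 m3 j v = vert_ok m m j v"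
        proof (rule vert_ok_cong)
          fix q :: nat assume "q < 8" then show "m3 (An n q j v) = m (An n q j v)" using same False v by simp
        next
          fix q u :: nat assume q: "q < 8" and u: "u < n"
          have "j - 1 \<noteq> k" using jk by simp
          then show "m3 (An n q (j - 1) u) = m (An n q (j - 1) u)" using same q u by simp
        qed
        then show ?thesis using tab jk v unfolding tables_ok_def by simp
      qed
    qed
    show ?thesis unfolding inc_def asg_def
      apply (rule wp_assign)
      using m20 apply simp
      using m20 apply simp
      using inp3 tab3 iN m20 unfolding KI_def k_def m3_def by simp
  qed
  show ?thesis unfolding kbody_def KT_def
    apply (rule wp_seq_gen)
    unfolding asg_def
    apply (rule wp_assign)
    using m0 apply simp
     apply simp
    apply (rule wp_seq_gen)
    apply (rule wp_post[of _ "VI m1 k n"])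
    using vloop_hT[OF vh] vi0 step unfolding hT_def by (auto simp: m1_def)
qed

lemma kloop_hT: "hT (KI 0) kloop (\<lambda>m. inp m \<and> tables_ok m n) (KLT n)"
proof -
  have bv: "bval (Less kE nE) m = Some (Suc i < n)" if "KI i m" for i m
  proof -
    have "m 0 = real n" "m (Vn n 0) = real (Suc i)" using that inp_0 unfolding KI_def by auto
    then show ?thesis by (simp add: kE_def del: of_nat_Suc)
  qed
  have "hT (KI 0) (While (Less kE nE) kbody)
     (\<lambda>m. \<exists>i. KI i m \<and> bval (Less kE nE) m = Some False) ((n+1)*(KT n + bcost (Less kE nE) + 1))"
  proof (rule hT_while)
    fix i show "hT (\<lambda>m. KI i m \<and> bval (Less kE nE) m = Some True) kbody (KI (Suc i)) (KT n)"
      unfolding hT_def using kbody_wp bv by auto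
  next
    fix i m assume "KI i m" then show "bval (Less kE nE) m \<noteq> None" using bv by simp
  next
    fix i m assume "KI i m" "bval (Less kE nE) m = Some True" then show "i < n" using bv by simp
  qed
  then show ?thesis unfolding kloop_def KLT_def
  proof (rule hT_conseq)
    fix m assume "\<exists>i. KI i m \<and> bval (Less kE nE) m = Some False"
    then obtain i where "KI i m" "bval (Less kE nE) m = Some False" by blast
    then have "KI i m" "Suc i = n" using bv[of i m] unfolding KI_def by auto
    then show "inp m \<and> tables_ok m n" unfolding KI_def by auto
  qed auto
qed

end


definition "sel w = Seq (asg 7 (Mul (Rd (N 3)) (Rd (tblA (1+3*w) kE (Rd (N 2))))))
   (If (Orb (isZ (vr 3)) (Less (vr 4) (vr 7))) (Seq (asg 4 (vr 7)) (Seq (asg 5 kE) (Seq (asg 6 (N (int w))) (asg 3 (N 1))))) SKIP)"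
definition "sbody = Seq (If (Less (N 0) (Rd (tblA 0 kE (Rd (N 2))))) (Seq (sel 0) (sel 1)) SKIP) (inc 0)"
definition "sloop = While (Less kE nE) sbody"
definition "select = Seq (asg 3 (N 0)) (Seq (asg 0 (N 0)) sloop)"

context gpp begin

lemma init_wp: "wpT init (KI 0) enc (tmax init)"
proof -
  define m' where "m' = enc(An n 0 0 s := 1, An n 1 0 s := x0, An n 4 0 s := x0, Vn n 0 := 1)"
  have sn: "s < n" using s_bound by simp
  have ki: "KI 0 m'"
    unfolding KI_def
  proof (intro conjI)
    show "inp m'" unfolding inp_def m'_def by simp
    show "m' (Vn n 0) = real (Suc 0)" by (simp add: m'_def)
    show "Suc 0 \<le> n" using n2 by simp
    show "tables_ok m' (Suc 0)" unfolding tables_ok_def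
    proof (intro allI impI)
      fix j v assume j: "j < Suc 0" and v: "v < n"
      have hi: "enc (An n q 0 v) = 0" for q by (rule enc_high) (simp add: An_def)
      have r: "m' (An n 0 0 v) = (if v = s then 1 else 0)" using v sn hi by (simp add: m'_def)
      have v1: "v = s \<Longrightarrow> m' (An n 1 0 v) = x0 \<and> m' (An n 4 0 v) = x0" using sn by (simp add: m'_def)
      have kp: "v = s \<and> pv p = x0" if "kpath 0 v p" for p using kpath0[OF that] by simp
      show "vert_ok m' m' j v" using j r v1 kp unfolding vert_ok_def by auto
    qed
  qed
  show ?thesis unfolding init_def asg_def
    using enc_low sn apply -
    apply (rule wp_seq wp_assign | simp)+
    using ki unfolding m'_def by simp
qed

lemma dp_wp: "wpT dp (\<lambda>m. inp m \<and> tables_ok m n) enc (Suc (tmax init + KLT n))"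
  unfolding dp_def
  apply (rule wp_seq_gen)
  apply (rule wp_post[OF init_wp])
  using kloop_hT unfolding hT_def by blast

end


context gpp begin

definition "SP m2 C m \<longleftrightarrow> (m (Vn n 3) = 0 \<or> m (Vn n 3) = 1) \<and> (m (Vn n 3) = 1 \<longleftrightarrow> C \<noteq> {})
  \<and> (m (Vn n 3) = 1 \<longrightarrow> (\<exists>bk bw. (bk,bw) \<in> C \<and> m (Vn n 5) = real bk \<and> m (Vn n 6) = real bw \<and> m (Vn n 4) = L * m2 (An n (1+3*bw) bk t)))
  \<and> (\<forall>(k,w)\<in>C. L * m2 (An n (1+3*w) k t) \<le> m (Vn n 4))"

definition "Ws = {Vn n 3, Vn n 4, Vn n 5, Vn n 6, Vn n 7}"

lemma SP_step:
  assumes sp: "SP m2 C m" and cd: "cd = L * m2 (An n (1+3*w) i t)"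
  and r: "m' (Vn n 3) = (if \<not> 0 < m (Vn n 3) \<or> m (Vn n 4) < cd then 1 else m (Vn n 3))"
  and hi: "if \<not> 0 < m (Vn n 3) \<or> m (Vn n 4) < cd then m' (Vn n 4) = cd \<and> m' (Vn n 5) = real i \<and> m' (Vn n 6) = real w
     else m' (Vn n 4) = m (Vn n 4) \<and> m' (Vn n 5) = m (Vn n 5) \<and> m' (Vn n 6) = m (Vn n 6)"
  shows "SP m2 (insert (i,w) C) m'"
proof (cases "\<not> 0 < m (Vn n 3) \<or> m (Vn n 4) < cd")
  case True
  then have m': "m' (Vn n 3) = 1" "m' (Vn n 4) = cd" "m' (Vn n 5) = real i" "m' (Vn n 6) = real w" using r hi by auto
  have "\<forall>(k,w')\<in>C. L * m2 (An n (1+3*w') k t) \<le> cd"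
  proof (cases "m (Vn n 3) = 1")
    case True
    then have "\<not> 0 < m (Vn n 3) \<or> m (Vn n 4) < cd \<Longrightarrow> m (Vn n 4) < cd" by simp
    then show ?thesis using sp \<open>\<not> 0 < m (Vn n 3) \<or> m (Vn n 4) < cd\<close> unfolding SP_def by fastforce
  next
    case False
    then have "C = {}" using sp unfolding SP_def by auto
    then show ?thesis by simp
  qed
  then show ?thesis using m' cd unfolding SP_def by auto
next
  case False
  then have m3: "m (Vn n 3) = 1" and le: "cd \<le> m (Vn n 4)" using sp unfolding SP_def by auto
  have m': "m' (Vn n 3) = 1" "m' (Vn n 4) = m (Vn n 4)" "m' (Vn n 5) = m (Vn n 5)" "m' (Vn n 6) = m (Vn n 6)"
    using r hi False m3 by auto
  obtain bk bw where b: "(bk,bw) \<in> C" "m (Vn n 5) = real bk" "m (Vn n 6) = real bw" "m (Vn n 4) = L * m2 (An n (1+3*bw) bk t)"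
    using sp m3 unfolding SP_def by auto
  have "\<forall>(k,w')\<in>C. L * m2 (An n (1+3*w') k t) \<le> m (Vn n 4)" using sp unfolding SP_def by auto
  then show ?thesis using m' b le cd unfolding SP_def by auto
qed

lemma sel_wp:
  assumes m0: "m 0 = real n" "m 2 = real t" "m 3 = L" and mi: "m (Vn n 0) = real i" and iN: "i < n"
  and w: "w \<le> 1" and vp: "m (An n (1+3*w) i t) = m2 (An n (1+3*w) i t)" and sp: "SP m2 C m"
  shows "wpT (sel w) (\<lambda>m'. SP m2 (insert (i,w) C) m' \<and> (\<forall>j. j \<notin> Ws \<longrightarrow> m' j = m j)) m (tmax (sel w))"
proof -
  have tn: "t < n" using s_bound by simp
  have W: "Vn n q \<in> Ws" if "3 \<le> q" "q \<le> 7" for q using that unfolding Ws_def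
    by (cases "q = 3"; cases "q = 4"; cases "q = 5"; cases "q = 6"; cases "q = 7") auto
  show ?thesis
    unfolding sel_def asg_def kE_def
    using assms tn W[of 3] W[of 4] W[of 5] W[of 6] W[of 7] apply -
    apply (rule wp_seq wp_assign wp_if2 wp_skip conjI[OF SP_step[OF sp]] | simp)+
    done
qed

definition "Ci m2 i = {(k,w). k < i \<and> m2 (An n 0 k t) = 1 \<and> w \<le> (1::nat)}"
definition "SI m2 i m \<longleftrightarrow> (\<forall>j. j \<notin> insert (Vn n 0) Ws \<longrightarrow> m j = m2 j) \<and> m (Vn n 0) = real i \<and> i \<le> n \<and> SP m2 (Ci m2 i) m"

lemma Ws_simps[simp]: "j < Bn n \<Longrightarrow> j \<notin> Ws" "q < 8 \<Longrightarrow> An n q k v \<notin> Ws" "i < 16 \<Longrightarrow> (Vn n i \<in> Ws) = (3 \<le> i \<and> i \<le> 7)"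
  unfolding Ws_def by auto

lemma sbody_wp:
  assumes sh: "inp m2" "tables_ok m2 n" and si: "SI m2 i m" and iN: "i < n"
  shows "wpT sbody (SI m2 (Suc i)) m (tmax sbody)"
proof -
  have tn: "t < n" using s_bound by simp
  have fr: "\<forall>j. j \<notin> insert (Vn n 0) Ws \<longrightarrow> m j = m2 j" and mi: "m (Vn n 0) = real i" and sp: "SP m2 (Ci m2 i) m"
    using si unfolding SI_def by auto
  have m20: "m2 0 = real n" "m2 2 = real t" "m2 3 = L" using inp_0[OF sh(1)] by auto
  have m0: "m 0 = real n" "m 2 = real t" "m 3 = L" using fr m20 by (auto simp: Bn_def)
  have mA: "m (An n q i t) = m2 (An n q i t)" if "q < 8" for q using fr that tn by simp
  have r01: "m2 (An n 0 i t) = 0 \<or> m2 (An n 0 i t) = 1" using sh(2) iN tn unfolding tables_ok_def vert_ok_def by blast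
  define Q' where "Q' = (\<lambda>m'. wpT (inc 0) (SI m2 (Suc i)) m' (tmax (inc 0)))"
  have post: "Q' m'" if f1: "\<forall>j. j \<notin> Ws \<longrightarrow> m' j = m j" and p1: "SP m2 (Ci m2 (Suc i)) m'" for m'
  proof -
    have m'0: "m' 0 = real n" "m' (Vn n 0) = real i" using f1 m0 mi by (auto simp: Bn_def)
    have fr': "\<forall>j. j \<notin> insert (Vn n 0) Ws \<longrightarrow> (m'(Vn n 0 := real i + 1)) j = m2 j"
      using f1 fr by auto
    have "SP m2 (Ci m2 (Suc i)) (m'(Vn n 0 := real i + 1)) = SP m2 (Ci m2 (Suc i)) m'"
      unfolding SP_def by simp
    then have sp': "SP m2 (Ci m2 (Suc i)) (m'(Vn n 0 := real i + 1))" using p1 by simp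
    show ?thesis unfolding Q'_def inc_def asg_def
      apply (rule wp_assign)
        apply (simp add: m'0)
       apply (simp add: m'0)
      using fr' sp' iN unfolding SI_def by simp
  qed
  have bvq: "bval (Less (N 0) (Rd (tblA 0 kE (Rd (N 2))))) m = Some (m2 (An n 0 i t) = 1)"
    using m0 mi mA[of 0] r01 by (auto simp: kE_def)
  show ?thesis
    unfolding sbody_def
  proof (rule wp_seq, rule wp_if2)
    show "bval (Less (N 0) (Rd (tblA 0 kE (Rd (N 2))))) m \<noteq> None" using bvq by simp
  next
    fix bv assume bv: "bval (Less (N 0) (Rd (tblA 0 kE (Rd (N 2))))) m = Some bv" and "\<not> bv"
    then have "m2 (An n 0 i t) \<noteq> 1" using bvq by simp
    then have "Ci m2 (Suc i) = Ci m2 i" by (auto simp: Ci_def less_Suc_eq)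
    then show "wpT SKIP (\<lambda>m'. wpT (inc 0) (SI m2 (Suc i)) m' (tmax (inc 0))) m (tmax SKIP)"
      using post[of m] sp by (intro wp_skip) (simp add: Q'_def)
  next
    fix bv assume bv: "bval (Less (N 0) (Rd (tblA 0 kE (Rd (N 2))))) m = Some bv" and "bv"
    then have c: "m2 (An n 0 i t) = 1" using bvq by simp
    then have S: "Ci m2 (Suc i) = insert (i,1) (insert (i,0) (Ci m2 i))"
      by (auto simp: Ci_def less_Suc_eq)
    have r0: "wpT (sel 0) (\<lambda>m'. SP m2 (insert (i,0) (Ci m2 i)) m' \<and> (\<forall>j. j \<notin> Ws \<longrightarrow> m' j = m j)) m (tmax (sel 0))"
      by (rule sel_wp) (use m0 mi iN mA sp in auto)
    show "wpT (Seq (sel 0) (sel 1)) (\<lambda>m'. wpT (inc 0) (SI m2 (Suc i)) m' (tmax (inc 0))) m (tmax (Seq (sel 0) (sel 1)))"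
    proof (rule wp_seq, rule wp_post[OF r0], elim conjE)
      fix m1 assume p1: "SP m2 (insert (i,0) (Ci m2 i)) m1" and f1: "\<forall>j. j \<notin> Ws \<longrightarrow> m1 j = m j"
      have m10: "m1 0 = real n" "m1 2 = real t" "m1 3 = L" "m1 (Vn n 0) = real i" using f1 m0 mi by (auto simp: Bn_def)
      have m1A: "m1 (An n 4 i t) = m2 (An n 4 i t)" using f1 mA[of 4] by simp
      have r1: "wpT (sel 1) (\<lambda>m'. SP m2 (insert (i,1) (insert (i,0) (Ci m2 i))) m' \<and> (\<forall>j. j \<notin> Ws \<longrightarrow> m' j = m1 j)) m1 (tmax (sel 1))"
        by (rule sel_wp) (use m10 iN m1A p1 in auto)
      show "wpT (sel 1) (\<lambda>m'. wpT (inc 0) (SI m2 (Suc i)) m' (tmax (inc 0))) m1 (tmax (sel 1))"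
        apply (rule wp_post[OF r1])
        using post f1 S unfolding Q'_def by auto
    qed
  qed
qed

definition "SLT = (n+1)*(tmax sbody + bcost (Less kE nE) + 1)"

lemma sloop_hT:
  assumes sh: "inp m2" "tables_ok m2 n"
  shows "hT (SI m2 0) sloop (SI m2 n) (SLT)"
proof -
  have m20: "m2 0 = real n" using inp_0[OF sh(1)] by auto
  have bv: "bval (Less kE nE) m = Some (i < n)" if "SI m2 i m" for i m
  proof -
    have "m 0 = real n" "m (Vn n 0) = real i" using that m20 unfolding SI_def by (auto simp: Bn_def)
    then show ?thesis by (simp add: kE_def)
  qed
  have "hT (SI m2 0) (While (Less kE nE) sbody)
     (\<lambda>m. \<exists>i. SI m2 i m \<and> bval (Less kE nE) m = Some False) ((n+1)*(tmax sbody + bcost (Less kE nE) + 1))"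
  proof (rule hT_while)
    fix i show "hT (\<lambda>m. SI m2 i m \<and> bval (Less kE nE) m = Some True) sbody (SI m2 (Suc i)) (tmax sbody)"
      unfolding hT_def using sbody_wp[OF sh] bv by auto
  next
    fix i m assume "SI m2 i m" then show "bval (Less kE nE) m \<noteq> None" using bv by simp
  next
    fix i m assume "SI m2 i m" "bval (Less kE nE) m = Some True" then show "i < n" using bv by simp
  qed
  then show ?thesis unfolding sloop_def SLT_def
    by (rule hT_conseq) (use bv in \<open>auto simp: SI_def\<close>)
qed

lemma select_wp:
  assumes sh: "inp m2" "tables_ok m2 n"
  shows "wpT select (SI m2 n) m2 (Suc (tmax (asg 3 (N 0)) + Suc (tmax (asg 0 (N 0)) + SLT)))"
proof -
  have m20: "m2 0 = real n" using inp_0[OF sh(1)] by auto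
  have si0: "SI m2 0 (m2(Vn n 3 := 0, Vn n 0 := 0))"
    unfolding SI_def SP_def by (auto simp: Ci_def Ws_def)
  show ?thesis unfolding select_def
    apply (rule wp_seq_gen)
    unfolding asg_def
    apply (rule wp_assign)
    using m20 apply simp
     apply simp
    apply (rule wp_seq_gen)
    apply (rule wp_assign)
    using m20 apply simp
     apply simp
    using sloop_hT[OF sh] si0 unfolding hT_def by simp
qed

end


definition "rbody = Seq (Assign (Add (vr 8) (N 1)) (vr 9))
   (Seq (asg 11 (Rd (tblAe (offE 2 10) (vr 8) (vr 9))))
   (Seq (asg 10 (Rd (tblAe (offE 3 10) (vr 8) (vr 9))))
   (Seq (asg 9 (vr 11)) (asg 8 (Sub (vr 8) (N 1))))))"
definition "rloop = While (Less (N 0) (vr 8)) rbody"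
definition "recon = Seq (asg 8 (vr 5)) (Seq (asg 9 (Rd (N 2))) (Seq (asg 10 (vr 6)) (Seq rloop
   (Seq (Assign (N 1) (vr 9)) (Assign (N 0) (Add (vr 5) (N 1)))))))"
definition "RLT n = (n+1)*(tmax rbody + bcost (Less (N 0) (vr 8)) + 1)"
definition "RT n = Suc (tmax (asg 8 (vr 5)) + Suc (tmax (asg 9 (Rd (N 2))) + Suc (tmax (asg 10 (vr 6)) +
   Suc (RLT n + Suc (tmax (Assign (N 1) (vr 9)) + tmax (Assign (N 0) (Add (vr 5) (N 1))))))))"

context gpp begin

lemma chain_Cons2: "chain (u # v # xs) \<longleftrightarrow> (u,v) \<in> E \<and> chain (v # xs)"
proof
  assume c: "chain (u # v # xs)"
  have "(u,v) \<in> E" using c unfolding chain_def by (metis Suc_less_eq length_Cons nth_Cons_0 nth_Cons_Suc zero_less_Suc)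
  moreover have "chain (v # xs)" unfolding chain_def
  proof (intro allI impI)
    fix i assume "Suc i < length (v # xs)"
    then have "Suc (Suc i) < length (u # v # xs)" by simp
    then have "((u # v # xs) ! Suc i, (u # v # xs) ! Suc (Suc i)) \<in> E" using c unfolding chain_def by blast
    then show "((v # xs) ! i, (v # xs) ! Suc i) \<in> E" by simp
  qed
  ultimately show "(u,v) \<in> E \<and> chain (v # xs)" by simp
next
  assume h: "(u,v) \<in> E \<and> chain (v # xs)"
  show "chain (u # v # xs)" unfolding chain_def
  proof (intro allI impI)
    fix i assume i: "Suc i < length (u # v # xs)"
    show "((u # v # xs) ! i, (u # v # xs) ! Suc i) \<in> E"
    proof (cases i)
      case 0 then show ?thesis using h by simp
    next
      case (Suc j)
      then have "Suc j < length (v # xs)" using i by simp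
      then have "((v # xs) ! j, (v # xs) ! Suc j) \<in> E" using h unfolding chain_def by blast
      then show ?thesis using Suc by simp
    qed
  qed
qed

definition "RI ms bk tgt i m \<longleftrightarrow> m 0 = real n \<and> (\<forall>j. Bn n \<le> j \<longrightarrow> j \<notin> {Vn n 8, Vn n 9, Vn n 10, Vn n 11} \<longrightarrow> m j = ms j)
   \<and> i \<le> bk \<and> m (Vn n 8) = real (bk - i)
   \<and> (\<exists>V W sfx. V < n \<and> W \<le> 1 \<and> m (Vn n 9) = real V \<and> m (Vn n 10) = real W \<and> ms (An n 0 (bk - i) V) = 1
       \<and> length sfx = i \<and> (\<forall>j<i. m (bk - i + 2 + j) = real (sfx!j)) \<and> chain (V#sfx) \<and> last (V#sfx) = t
       \<and> path_apply a b (V#sfx) (ms (An n (1+3*W) (bk-i) V)) = tgt)"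

lemma low_lt_B: "j \<le> n + 1 \<Longrightarrow> j < Bn n"
proof -
  assume "j \<le> n + 1"
  moreover have "n \<le> n * n" by (rule le_square)
  then have "n + 1 < Bn n" unfolding Bn_def by linarith
  ultimately show ?thesis by simp
qed

lemma rbody_wp:
  assumes tab: "tables_ok ms n" and bkn: "bk < n" and ri: "RI ms bk tgt i m" and c: "i < bk"
  shows "wpT rbody (RI ms bk tgt (Suc i)) m (tmax rbody)"
proof -
  define K where "K = bk - i"
  have K1: "1 \<le> K" "K < n" "K + 1 < Bn n" "Suc K < Bn n" using c bkn low_lt_B[of "K+1"] unfolding K_def by auto
  have m0: "m 0 = real n" and fr: "\<forall>j. Bn n \<le> j \<longrightarrow> j \<notin> {Vn n 8, Vn n 9, Vn n 10, Vn n 11} \<longrightarrow> m j = ms j"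
    and m8: "m (Vn n 8) = real K"
    using ri unfolding RI_def K_def by auto
  obtain V W sfx where VW: "V < n" "W \<le> 1" "m (Vn n 9) = real V" "m (Vn n 10) = real W" "ms (An n 0 K V) = 1"
    and sf: "length sfx = i" "\<forall>j<i. m (K + 2 + j) = real (sfx!j)" "chain (V#sfx)" "last (V#sfx) = t"
    "path_apply a b (V#sfx) (ms (An n (1+3*W) K V)) = tgt"
    using ri unfolding RI_def K_def by blast
  have vo: "vert_ok ms ms K V" using tab K1 VW unfolding tables_ok_def by blast
  have K0: "K \<noteq> 0" using K1 by simp
  have "ptr1 n E a b ms (K-1) K V (1+3*W) (2+3*W) (3+3*W) ms"
  proof (cases "W = 0")
    case True then show ?thesis using vo VW K0 unfolding vert_ok_def by simp
  next
    case False then have "W = 1" using VW by simp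
    then show ?thesis using vo VW K0 unfolding vert_ok_def by simp
  qed
  then obtain u f where uf: "u < n" "f \<le> 1" "ms (An n (2+3*W) K V) = real u" "ms (An n (3+3*W) K V) = real f"
    "(u,V) \<in> E" "ms (An n 0 (K-1) u) = 1" "ms (An n (1+3*W) K V) = a u V * ms (An n (1+3*f) (K-1) u) + b u V"
    unfolding ptr1_def cnd_def by blast
  have mA: "m (An n q K V) = ms (An n q K V)" for q
  proof -
    have "Bn n \<le> An n q K V" by (simp add: An_def)
    then show ?thesis using fr by simp
  qed
  define M where "M = m(K+1 := real V, Vn n 11 := real u, Vn n 10 := real f, Vn n 9 := real u, Vn n 8 := real K - 1)"
  have ex: "wpT rbody (\<lambda>m'. m' = M) m (tmax rbody)"
    unfolding rbody_def asg_def
    using m0 m8 VW K1 uf mA[of "2+3*W"] mA[of "3+3*W"] apply -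
    apply (rule wp_seq, rule wp_assign[where k = "K + 1"])
      apply simp
     apply simp
    apply (rule wp_seq wp_assign | simp)+
    unfolding M_def apply simp
    done
  have KK: "bk - Suc i = K - 1" unfolding K_def by simp
  have r8: "real K - 1 = real (bk - Suc i)" using K1 KK by (simp add: of_nat_diff)
  have cells: "\<forall>j<Suc i. M (bk - Suc i + 2 + j) = real ((V#sfx)!j)"
  proof (intro allI impI)
    fix j assume j: "j < Suc i"
    have a: "bk - Suc i + 2 + j = K + 1 + j" using K1 KK by simp
    show "M (bk - Suc i + 2 + j) = real ((V#sfx)!j)"
    proof (cases j)
      case 0 then show ?thesis using a K1 by (simp add: M_def)
    next
      case (Suc j')
      then have j': "j' < i" using j by simp
      have lt: "K + 2 + j' < Bn n" using low_lt_B[of "K + 2 + j'"] j' c bkn unfolding K_def by simp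
      have "M (K + 1 + j) = m (K + 2 + j')" using Suc lt by (simp add: M_def)
      also have "\<dots> = real (sfx!j')" using sf(2) j' by simp
      finally show ?thesis using a Suc by simp
    qed
  qed
  have RM: "RI ms bk tgt (Suc i) M"
    unfolding RI_def
  proof (intro conjI)
    show "M 0 = real n" using m0 by (simp add: M_def)
    show "\<forall>j. Bn n \<le> j \<longrightarrow> j \<notin> {Vn n 8, Vn n 9, Vn n 10, Vn n 11} \<longrightarrow> M j = ms j"
      using fr K1 by (auto simp: M_def)
    show "Suc i \<le> bk" using c by simp
    show "M (Vn n 8) = real (bk - Suc i)" using r8 by (simp add: M_def)
    show "\<exists>V W sfx. V < n \<and> W \<le> 1 \<and> M (Vn n 9) = real V \<and> M (Vn n 10) = real W \<and> ms (An n 0 (bk - Suc i) V) = 1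
       \<and> length sfx = Suc i \<and> (\<forall>j<Suc i. M (bk - Suc i + 2 + j) = real (sfx!j)) \<and> chain (V#sfx) \<and> last (V#sfx) = t
       \<and> path_apply a b (V#sfx) (ms (An n (1+3*W) (bk - Suc i) V)) = tgt"
    proof (intro exI conjI)
      show "u < n" "f \<le> 1" "M (Vn n 9) = real u" "M (Vn n 10) = real f" using uf by (simp_all add: M_def)
      show "ms (An n 0 (bk - Suc i) u) = 1" using uf KK by simp
      show "length (V#sfx) = Suc i" using sf by simp
      show "\<forall>j<Suc i. M (bk - Suc i + 2 + j) = real ((V#sfx)!j)" by (rule cells)
      show "chain (u # V # sfx)" using chain_Cons2 uf sf by simp
      show "last (u # V # sfx) = t" using sf by simp
      show "path_apply a b (u # V # sfx) (ms (An n (1+3*f) (bk - Suc i) u)) = tgt"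
        using sf(5) uf(7) KK by simp
    qed
  qed
  show ?thesis using wp_post[OF ex] RM by blast
qed

lemma rloop_hT:
  assumes tab: "tables_ok ms n" and bkn: "bk < n"
  shows "hT (RI ms bk tgt 0) rloop (RI ms bk tgt bk) (RLT n)"
proof -
  have bv: "bval (Less (N 0) (vr 8)) m = Some (i < bk)" if "RI ms bk tgt i m" for i m
  proof -
    have "m 0 = real n" "m (Vn n 8) = real (bk - i)" using that unfolding RI_def by auto
    then show ?thesis by simp
  qed
  have "hT (RI ms bk tgt 0) (While (Less (N 0) (vr 8)) rbody)
     (\<lambda>m. \<exists>i. RI ms bk tgt i m \<and> bval (Less (N 0) (vr 8)) m = Some False) ((n+1)*(tmax rbody + bcost (Less (N 0) (vr 8)) + 1))"
  proof (rule hT_while)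
    fix i show "hT (\<lambda>m. RI ms bk tgt i m \<and> bval (Less (N 0) (vr 8)) m = Some True) rbody (RI ms bk tgt (Suc i)) (tmax rbody)"
      unfolding hT_def using rbody_wp[OF tab bkn] bv by auto
  next
    fix i m assume "RI ms bk tgt i m" then show "bval (Less (N 0) (vr 8)) m \<noteq> None" using bv by simp
  next
    fix i m assume "RI ms bk tgt i m" "bval (Less (N 0) (vr 8)) m = Some True" then show "i < n" using bv bkn by simp
  qed
  then show ?thesis unfolding rloop_def RLT_def
    by (rule hT_conseq) (use bv in \<open>auto simp: RI_def\<close>)
qed

lemma recon_wp:
  assumes tab: "tables_ok ms n" and bkn: "bk < n" and bw: "bw \<le> 1"
  and ms: "ms 0 = real n" "ms 2 = real t" "ms (Vn n 5) = real bk" "ms (Vn n 6) = real bw" "ms (An n 0 bk t) = 1"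
  shows "wpT recon (\<lambda>m'. \<exists>vs. outputs_path m' vs \<and> is_st_path E s t vs \<and> pv vs = ms (An n (1+3*bw) bk t)) ms (RT n)"
proof -
  define tgt where "tgt = ms (An n (1+3*bw) bk t)"
  have tn: "t < n" using s_bound by simp
  define m1 where "m1 = ms(Vn n 8 := real bk, Vn n 9 := real t, Vn n 10 := real bw)"
  have ri0: "RI ms bk tgt 0 m1" unfolding RI_def
  proof (intro conjI)
    show "m1 0 = real n" using ms by (simp add: m1_def)
    show "\<forall>j. Bn n \<le> j \<longrightarrow> j \<notin> {Vn n 8, Vn n 9, Vn n 10, Vn n 11} \<longrightarrow> m1 j = ms j" by (simp add: m1_def)
    show "0 \<le> bk" by simp
    show "m1 (Vn n 8) = real (bk - 0)" by (simp add: m1_def)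
    show "\<exists>V W sfx. V < n \<and> W \<le> 1 \<and> m1 (Vn n 9) = real V \<and> m1 (Vn n 10) = real W \<and> ms (An n 0 (bk - 0) V) = 1
       \<and> length sfx = 0 \<and> (\<forall>j<0. m1 (bk - 0 + 2 + j) = real (sfx!j)) \<and> chain (V#sfx) \<and> last (V#sfx) = t
       \<and> path_apply a b (V#sfx) (ms (An n (1+3*W) (bk - 0) V)) = tgt"
      using tn bw ms by (intro exI[of _ t] exI[of _ bw] exI[of _ "[]"]) (simp add: m1_def chain_def tgt_def)
  qed
  have fin: "wpT (Seq (Assign (N 1) (vr 9)) (Assign (N 0) (Add (vr 5) (N 1))))
      (\<lambda>m'. \<exists>vs. outputs_path m' vs \<and> is_st_path E s t vs \<and> pv vs = tgt) m2
      (Suc (tmax (Assign (N 1) (vr 9)) + tmax (Assign (N 0) (Add (vr 5) (N 1)))))"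
    if ri: "RI ms bk tgt bk m2" for m2
  proof -
    have m20: "m2 0 = real n" and fr: "\<forall>j. Bn n \<le> j \<longrightarrow> j \<notin> {Vn n 8, Vn n 9, Vn n 10, Vn n 11} \<longrightarrow> m2 j = ms j"
      using ri unfolding RI_def by auto
    obtain V W sfx where VW: "V < n" "W \<le> 1" "m2 (Vn n 9) = real V" "ms (An n 0 0 V) = 1"
      and sf: "length sfx = bk" "\<forall>j<bk. m2 (2 + j) = real (sfx!j)" "chain (V#sfx)" "last (V#sfx) = t"
      "path_apply a b (V#sfx) (ms (An n (1+3*W) 0 V)) = tgt"
      using ri unfolding RI_def by auto
    have vo: "vert_ok ms ms 0 V" using tab VW n2 unfolding tables_ok_def by auto
    then have Vs0: "V = s" "ms (An n 1 0 V) = x0" "ms (An n 4 0 V) = x0" using VW unfolding vert_ok_def by auto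
    have "ms (An n (1+3*W) 0 V) = x0"
    proof (cases "W = 0")
      case True then show ?thesis using Vs0 by simp
    next
      case False then have "W = 1" using VW by simp
      then show ?thesis using Vs0 by simp
    qed
    note Vs = Vs0(1) this
    have "Bn n \<le> Vn n 5" by (simp add: Vn_def Bn_def)
    then have m25: "m2 (Vn n 5) = real bk" using fr ms by simp
    define M where "M = m2(1 := real V, 0 := real bk + 1)"
    have out: "outputs_path M (V#sfx)" unfolding outputs_path_def
    proof (intro conjI allI impI)
      show "M 0 = real (length (V#sfx))" using sf by (simp add: M_def)
      fix i assume i: "i < length (V#sfx)"
      show "M (Suc i) = real ((V#sfx)!i)"
      proof (cases i)
        case 0 then show ?thesis by (simp add: M_def)
      next
        case (Suc j) then have "j < bk" using i sf by simp
        then show ?thesis using sf(2) Suc by (simp add: M_def add.commute)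
      qed
    qed
    have st: "is_st_path E s t (V#sfx)" using sf Vs unfolding is_st_path_def chain_def by simp
    have pvv: "pv (V#sfx) = tgt" using sf Vs by simp
    show ?thesis
      apply (rule wp_seq_gen)
      apply (rule wp_assign[where k = 1])
        apply simp
      using m20 apply simp
      apply (rule wp_assign[where k = 0])
        apply simp
      using m20 apply simp
      using out st pvv VW m25 unfolding M_def by auto
  qed
  have l4: "wpT (Seq rloop (Seq (Assign (N 1) (vr 9)) (Assign (N 0) (Add (vr 5) (N 1)))))
      (\<lambda>m'. \<exists>vs. outputs_path m' vs \<and> is_st_path E s t vs \<and> pv vs = tgt) m1
      (Suc (RLT n + Suc (tmax (Assign (N 1) (vr 9)) + tmax (Assign (N 0) (Add (vr 5) (N 1))))))"
    apply (rule wp_seq_gen)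
    apply (rule wp_post[of _ "RI ms bk tgt bk"])
    using rloop_hT[OF tab bkn] ri0 fin unfolding hT_def by auto
  show ?thesis unfolding recon_def RT_def asg_def tgt_def[symmetric]
    using ms apply -
    apply (rule wp_seq_gen, rule wp_assign, simp, simp)+
    using l4 unfolding m1_def by simp
qed

end


definition "theprog = Seq dp (Seq select recon)"
definition "TT n = Suc (Suc (tmax init + KLT n) + Suc (Suc (tmax (asg 3 (N 0)) + Suc (tmax (asg 0 (N 0)) +
   (n+1)*(tmax sbody + bcost (Less kE nE) + 1))) + RT n))"

context gpp begin

lemma chain_trancl: "chain p \<Longrightarrow> j < length p \<Longrightarrow> i < j \<Longrightarrow> (p!i, p!j) \<in> E\<^sup>+"
proof (induction j)
  case 0 then show ?case by simp
next
  case (Suc j)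
  have e: "(p!j, p!Suc j) \<in> E" using Suc.prems unfolding chain_def by blast
  show ?case
  proof (cases "i = j")
    case True then show ?thesis using e by auto
  next
    case False
    then have "(p!i, p!j) \<in> E\<^sup>+" using Suc by simp
    then show ?thesis using e by (meson trancl.trancl_into_trancl)
  qed
qed

lemma st_len: assumes st: "is_st_path E s t ws" shows "length ws \<le> n"
proof -
  have c: "chain ws" using st unfolding is_st_path_def chain_def by blast
  have d: "distinct ws"
  proof (rule ccontr)
    assume "\<not> distinct ws"
    then obtain i j where ij: "i < j" "j < length ws" "ws!i = ws!j"
      by (metis distinct_conv_nth linorder_neqE_nat)
    then have "(ws!i, ws!i) \<in> E\<^sup>+" using chain_trancl[OF c ij(2,1)] by simp
    then show False using acyc unfolding acyclic_def by blast
  qed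
  have sub: "set ws \<subseteq> {..<n}"
  proof
    fix x assume "x \<in> set ws"
    then obtain i where i: "i < length ws" "ws!i = x" by (metis in_set_conv_nth)
    show "x \<in> {..<n}"
    proof (cases "Suc i < length ws")
      case True
      then have "(ws!i, ws!Suc i) \<in> E" using c unfolding chain_def by blast
      then show ?thesis using i E_bound by auto
    next
      case False
      then have "i = length ws - 1" using i by simp
      moreover have "ws \<noteq> []" using i by auto
      ultimately have "x = last ws" using i by (simp add: last_conv_nth)
      then show ?thesis using st s_bound unfolding is_st_path_def by simp
    qed
  qed
  have "length ws = card (set ws)" using d by (simp add: distinct_card)
  also have "\<dots> \<le> card {..<n}" using sub by (intro card_mono) auto
  finally show ?thesis by simp
qed

lemma st_kpath: assumes st: "is_st_path E s t ws" shows "kpath (length ws - 1) t ws" "length ws - 1 < n"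
proof -
  have "ws \<noteq> []" using st unfolding is_st_path_def by simp
  then show "kpath (length ws - 1) t ws" using st unfolding is_st_path_def kpath_def chain_def by simp
  show "length ws - 1 < n" using st_len[OF st] \<open>ws \<noteq> []\<close> n2 by simp
qed

lemma after_select:
  assumes ex: "\<exists>vs. is_st_path E s t vs" and inp2: "inp m2" and tab2: "tables_ok m2 n" and si: "SI m2 n m3"
  shows "wpT recon (\<lambda>m'. \<exists>vs. outputs_path m' vs \<and> optimal_path E a b L x0 s t vs) m3 (RT n)"
proof -
  have tn: "t < n" using s_bound by simp
  have fr: "\<forall>j. j \<notin> insert (Vn n 0) Ws \<longrightarrow> m3 j = m2 j" and sp: "SP m2 (Ci m2 n) m3" using si unfolding SI_def by auto
  obtain vs0 where vs0: "is_st_path E s t vs0" using ex by blast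
  have inCi: "(length ws - 1, 0) \<in> Ci m2 n \<and> (length ws - 1, 1) \<in> Ci m2 n \<and>
      m2 (An n 4 (length ws - 1) t) \<le> pv ws \<and> pv ws \<le> m2 (An n 1 (length ws - 1) t)" if st: "is_st_path E s t ws" for ws
  proof -
    have vo: "vert_ok m2 m2 (length ws - 1) t" using tab2 st_kpath(2)[OF st] tn unfolding tables_ok_def by simp
    then show ?thesis using st_kpath[OF st] unfolding vert_ok_def Ci_def by auto
  qed
  then have "Ci m2 n \<noteq> {}" using vs0 by blast
  then have f1: "m3 (Vn n 3) = 1" using sp unfolding SP_def by auto
  then obtain bk bw where b: "(bk,bw) \<in> Ci m2 n" "m3 (Vn n 5) = real bk" "m3 (Vn n 6) = real bw" "m3 (Vn n 4) = L * m2 (An n (1+3*bw) bk t)"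
    using sp unfolding SP_def by blast
  have bd: "\<forall>(k,w)\<in>Ci m2 n. L * m2 (An n (1+3*w) k t) \<le> m3 (Vn n 4)" using sp unfolding SP_def by blast
  have bkn: "bk < n" "bw \<le> 1" "m2 (An n 0 bk t) = 1" using b(1) unfolding Ci_def by auto
  have mA: "m3 (An n q k v) = m2 (An n q k v)" if "q < 8" for q k v using fr that by simp
  have tab3: "tables_ok m3 n" unfolding tables_ok_def
  proof (intro allI impI)
    fix j v assume "j < n" "v < n"
    have "vert_ok m3 m3 j v = vert_ok m2 m2 j v" by (rule vert_ok_cong) (simp_all add: mA)
    then show "vert_ok m3 m3 j v" using tab2 \<open>j < n\<close> \<open>v < n\<close> unfolding tables_ok_def by simp
  qed
  have m30: "m3 0 = real n" "m3 2 = real t" using fr inp_0[OF inp2] by (auto simp: Bn_def)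
  have rw: "wpT recon (\<lambda>m'. \<exists>vs. outputs_path m' vs \<and> is_st_path E s t vs \<and> pv vs = m3 (An n (1+3*bw) bk t)) m3 (RT n)"
    by (rule recon_wp[OF tab3 bkn(1) bkn(2) m30 b(2) b(3)]) (simp add: mA bkn(3))
  show ?thesis
  proof (rule wp_post[OF rw], elim exE conjE)
    fix m' vs assume o: "outputs_path m' vs" and st: "is_st_path E s t vs" and pvv: "pv vs = m3 (An n (1 + 3 * bw) bk t)"
    have tg: "pv vs = m2 (An n (1 + 3 * bw) bk t)" using pvv mA[of "1+3*bw"] bkn by simp
    have "L * pv ws \<le> L * pv vs" if ws: "is_st_path E s t ws" for ws
    proof -
      note h = inCi[OF ws]
      have c0: "L * m2 (An n 1 (length ws - 1) t) \<le> L * pv vs" using bd h b(4) tg by fastforce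
      have c1: "L * m2 (An n 4 (length ws - 1) t) \<le> L * pv vs" using bd h b(4) tg by fastforce
      show ?thesis
      proof (cases "L \<ge> 0")
        case True
        then have "L * pv ws \<le> L * m2 (An n 1 (length ws - 1) t)" using h by (simp add: mult_left_mono)
        then show ?thesis using c0 by linarith
      next
        case False
        then have "L * pv ws \<le> L * m2 (An n 4 (length ws - 1) t)" using h by (simp add: mult_left_mono_neg)
        then show ?thesis using c1 by linarith
      qed
    qed
    then show "\<exists>vs. outputs_path m' vs \<and> optimal_path E a b L x0 s t vs"
      using o st unfolding optimal_path_def by blast
  qed
qed

lemma main:
  assumes ex: "\<exists>vs. is_st_path E s t vs"
  shows "wpT theprog (\<lambda>m'. \<exists>vs. outputs_path m' vs \<and> optimal_path E a b L x0 s t vs) enc (TT n)"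
proof -
  have sel: "wpT (Seq select recon) (\<lambda>m'. \<exists>vs. outputs_path m' vs \<and> optimal_path E a b L x0 s t vs) m2
     (Suc (Suc (tmax (asg 3 (N 0)) + Suc (tmax (asg 0 (N 0)) + SLT)) + RT n))" if "inp m2 \<and> tables_ok m2 n" for m2
    apply (rule wp_seq_gen)
    apply (rule wp_post[OF select_wp])
    using that after_select[OF ex] by auto
  show ?thesis unfolding theprog_def TT_def
    apply (rule wp_seq_gen)
    apply (rule wp_post[OF dp_wp])
    using sel unfolding SLT_def by simp
qed

end

definition "PB f d \<longleftrightarrow> (\<exists>C::nat. \<forall>n. f n \<le> C * (n+1)^d)"

lemma PB_const: "PB (\<lambda>n. c) d"
  unfolding PB_def by (intro exI[of _ c]) (simp add: Suc_le_eq)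
lemma PB_add: "PB f d \<Longrightarrow> PB g d \<Longrightarrow> PB (\<lambda>n. f n + g n) d"
  unfolding PB_def
proof (elim exE)
  fix C1 C2 assume h1: "\<forall>n. f n \<le> C1 * (n + 1) ^ d" and h2: "\<forall>n. g n \<le> C2 * (n + 1) ^ d"
  show "\<exists>C. \<forall>n. f n + g n \<le> C * (n + 1) ^ d"
  proof (intro exI[of _ "C1 + C2"] allI)
    fix n
    have "f n + g n \<le> C1 * (n + 1) ^ d + C2 * (n + 1) ^ d" using h1 h2 by (meson add_mono)
    then show "f n + g n \<le> (C1 + C2) * (n + 1) ^ d" by (simp add: add_mult_distrib)
  qed
qed
lemma PB_Suc: "PB f d \<Longrightarrow> PB (\<lambda>n. Suc (f n)) d"
proof -
  assume "PB f d"
  then have "PB (\<lambda>n. 1 + f n) d" using PB_add PB_const by blast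
  then show ?thesis by simp
qed
lemma PB_mul: "PB f d \<Longrightarrow> PB (\<lambda>n. (n+1) * f n) (Suc d)"
  unfolding PB_def
proof (elim exE)
  fix C assume h: "\<forall>n. f n \<le> C * (n + 1) ^ d"
  show "\<exists>C. \<forall>n. (n + 1) * f n \<le> C * (n + 1) ^ Suc d"
  proof (intro exI[of _ C] allI)
    fix n
    have "(n + 1) * f n \<le> (n + 1) * (C * (n + 1) ^ d)" using h by (simp only: mult_le_mono2)
    also have "\<dots> = C * (n + 1) ^ Suc d" by (simp add: algebra_simps)
    finally show "(n + 1) * f n \<le> C * (n + 1) ^ Suc d" .
  qed
qed

lemma TT_PB: "PB TT (Suc (Suc (Suc 0)))"
  unfolding TT_def KLT_def KT_def VLT_def VT_def UT_def RT_def RLT_def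
  by (intro PB_add PB_Suc PB_mul PB_const)

theorem theorem1:
  shows "\<exists>(prog :: com) (c :: nat).
     \<forall>n E a b L x0 s t.
       scalar_gpp_instance n E s t \<and> (\<exists>vs. is_st_path E s t vs) \<longrightarrow>
       (\<exists>time m' vs.
          big_step prog (encode_input n E a b L x0 s t) time m' \<and>
          time \<le> c * n ^ 3 \<and>
          outputs_path m' vs \<and> optimal_path E a b L x0 s t vs)"
proof -
  obtain C where C: "\<forall>n. TT n \<le> C * (n+1)^3" using TT_PB unfolding PB_def by (auto simp: numeral_3_eq_3)
  show ?thesis
  proof (rule exI[of _ theprog], rule exI[of _ "8*C"], intro allI impI)
    fix n E a b L x0 s t
    assume h: "scalar_gpp_instance n E s t \<and> (\<exists>vs. is_st_path E s t vs)"
    interpret g: gpp n E a b L x0 s t by (rule gpp.intro) (use h in blast)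
    from g.main h obtain time m' where r: "big_step theprog (encode_input n E a b L x0 s t) time m'" "time \<le> TT n"
      "\<exists>vs. outputs_path m' vs \<and> optimal_path E a b L x0 s t vs"
      unfolding wpT_def by blast
    have "n + 1 \<le> 2 * n" using g.n2 by simp
    then have "(n+1)^3 \<le> (2*n)^3" by (rule power_mono) simp
    also have "\<dots> = 8 * n^3" by (simp add: power_mult_distrib)
    finally have "C * (n+1)^3 \<le> C * (8 * n^3)" by simp
    then have "time \<le> 8 * C * n ^ 3" using r(2) C by (metis le_trans mult.assoc mult.commute)
    then show "\<exists>time m' vs. big_step theprog (encode_input n E a b L x0 s t) time m' \<and> time \<le> 8 * C * n ^ 3 \<and>
          outputs_path m' vs \<and> optimal_path E a b L x0 s t vs"
      using r(1) r(3) by blast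
  qed
qed


end
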